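(* Let $H$ be an $l$-ARS graph. Then $\chi_c(H)=l$, and there exists an integer $n_0$ such that every graph $G\in\mathrm{red}(\mathrm{Forb}(H))$ with $|V(G)|\ge n_0$ has at most one non-edge. In particular, $H$ is $2$-critical.
   Context: All graphs are finite and simple; $\mathrm{Forb}(H)$ is the family of graphs with no induced subgraph isomorphic to $H$. A non-edge is a pair of distinct non-adjacent vertices. $\mathcal{C}$ is the family of complete graphs; $\iota(J)$ is the family of graphs isomorphic to induced subgraphs of $J$; $\mathcal{F}_1\vee\mathcal{F}_2$ (resp. $\mathcal{F}_1\wedge\mathcal{F}_2$) is the family of disjoint unions (resp. joins) of a graph in $\mathcal{F}_1$ and a graph in $\mathcal{F}_2$. $K_1$ is the one-vertex graph, $S_3$ the edgeless graph on $3$ vertices, $C_4$ the $4$-cycle, $\bar P_3$ the complement of the $3$-vertex path. $\mathcal{H}(s,t)$ is the family of graphs whose vertex set can be partitioned into $s$ stable sets and $t$ cliques. For a hereditary family $\mathcal{F}$, $\chi_c(\mathcal{F})$ is the maximum $l$ with $\mathcal{H}(s,l-s)\subseteq\mathcal{F}$ for some $0\le s\le l$; $\chi_c(H)=\chi_c(\mathrm{Forb}(H))$ (equivalently, the maximum $l$ such that $H\notin\mathcal{H}(s,t)$ for some $s,t\ge0$ with $s+t=l$). With $l=\chi_c(\mathcal{F})$, a graph $J$ is $\mathcal{F}$-reduced if there is $0\le s\le l-1$ such that $\mathcal{F}$ contains every graph whose vertex set partitions into $l$ parts, one inducing a graph isomorphic to an induced subgraph of $J$, $s$ stable sets and $l-1-s$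 cliques; $\mathrm{red}(\mathcal{F})$ is the family of $\mathcal{F}$-reduced graphs. A graph $G$ is an $s$-star if there is $S\subseteq V(G)$, $|S|\le s$, with $G-S$ complete or edgeless and every vertex of $S$ adjacent to all or to none of $V(G)\setminus S$. A graph $H$ is $s$-critical if there is $n_0$ such that every $K\in\mathrm{red}(\mathrm{Forb}(H))$ with $|V(K)|\ge n_0$ is an $s$-star. A graph $H$ is an $l$-ARS-graph ($l$ a positive integer) if: (ARS1) for every $1\le s\le l$, $V(H)$ can be partitioned into $s$ stable sets and $l-s$ cliques; (ARS2) for each $\mathcal{G}\in\{\iota(K_1)\vee\mathcal{C},\iota(S_3)\wedge\mathcal{C},\iota(C_4)\wedge\mathcal{C},\iota(\bar P_3)\wedge\mathcal{C}\}$, $V(H)$ can be partitioned into $l-1$ cliques and a set inducing a graph in $\mathcal{G}$; (ARS3) there is a partition $\mathcal{X}_0=\{X_1,\dots,X_l\}$ of $V(H)$ with $X_1,\dots,X_{l-2}$ cliques, each of $H[X_{l-1}],H[X_l]$ having exactly one non-edge, and the four vertices of these two non-edges forming an independent set; (ARS4) for every partition $\mathcal{X}\ne\mathcal{X}_0$ of $V(H)$ with $|\mathcal{X}|=l$ some $X\in\mathcal{X}$ has $H[X]$ with at least two non-edges. *)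

theory Defs
  imports Main "HOL-Library.Disjoint_Sets"
begin

record 'a graph =
  verts :: "'a set"
  adj :: "'a \<Rightarrow> 'a \<Rightarrow> bool"

definition graph :: "('a, 'b) graph_scheme \<Rightarrow> bool" where
  "graph G \<longleftrightarrow> finite (verts G) \<and>
     (\<forall>x y. adj G x y \<longrightarrow> x \<in> verts G \<and> y \<in> verts G \<and> x \<noteq> y \<and> adj G y x)"

definition induced :: "'a graph \<Rightarrow> 'a set \<Rightarrow> 'a graph" where
  "induced G X = \<lparr>verts = X, adj = (\<lambda>x y. x \<in> X \<and> y \<in> X \<and> adj G x y)\<rparr>"

definition iso :: "'a graph \<Rightarrow> 'b graph \<Rightarrow> bool" where
  "iso G H \<longleftrightarrow> (\<exists>f. bij_betw f (verts G) (verts H) \<and>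
     (\<forall>x\<in>verts G. \<forall>y\<in>verts G. adj G x y \<longleftrightarrow> adj H (f x) (f y)))"

definition has_induced :: "'a graph \<Rightarrow> 'b graph \<Rightarrow> bool" where
  "has_induced G H \<longleftrightarrow> (\<exists>X \<subseteq> verts G. iso (induced G X) H)"

definition stable :: "'a graph \<Rightarrow> 'a set \<Rightarrow> bool" where
  "stable G X \<longleftrightarrow> (\<forall>x\<in>X. \<forall>y\<in>X. \<not> adj G x y)"

definition clique :: "'a graph \<Rightarrow> 'a set \<Rightarrow> bool" where
  "clique G X \<longleftrightarrow> (\<forall>x\<in>X. \<forall>y\<in>X. x \<noteq> y \<longrightarrow> adj G x y)"

definition nonedges :: "'a graph \<Rightarrow> 'a set set" where
  "nonedges G = {{x, y} | x y. x \<in> verts G \<and> y \<in> verts G \<and> x \<noteq> y \<and> \<not> adj G x y}"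

text \<open>Graphs are taken with vertices in nat: every finite graph is isomorphic to one.\<close>
definition Forb :: "'a graph \<Rightarrow> nat graph set" where
  "Forb H = {G. graph G \<and> \<not> has_induced G H}"

text \<open>Partition of V into n indexed parts P 0, ..., P (n-1) (parts may be empty).\<close>
definition ipartition :: "'a set \<Rightarrow> nat \<Rightarrow> (nat \<Rightarrow> 'a set) \<Rightarrow> bool" where
  "ipartition V n P \<longleftrightarrow> (\<Union>i<n. P i) = V \<and>
     (\<forall>i<n. \<forall>j<n. i \<noteq> j \<longrightarrow> P i \<inter> P j = {})"

definition st_partitionable :: "'a graph \<Rightarrow> nat \<Rightarrow> nat \<Rightarrow> bool" where
  "st_partitionable G s t \<longleftrightarrow> (\<exists>P. ipartition (verts G) (s + t) P \<and>
     (\<forall>i<s. stable G (P i)) \<and> (\<forall>i. s \<le> i \<and> i < s + t \<longrightarrow> clique G (P i)))"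

definition Hst :: "nat \<Rightarrow> nat \<Rightarrow> nat graph set" where
  "Hst s t = {G. graph G \<and> st_partitionable G s t}"

definition chi_c :: "nat graph set \<Rightarrow> nat" where
  "chi_c F = Max {l. \<exists>s\<le>l. Hst s (l - s) \<subseteq> F}"

definition chi_c_graph :: "'a graph \<Rightarrow> nat" where
  "chi_c_graph H = chi_c (Forb H)"

definition reduced :: "nat graph set \<Rightarrow> nat graph \<Rightarrow> bool" where
  "reduced F J \<longleftrightarrow> (let l = chi_c F in \<exists>s. s + 1 \<le> l \<and>
     (\<forall>G :: nat graph. graph G \<longrightarrow>
        (\<exists>P. ipartition (verts G) l P \<and> has_induced J (induced G (P 0)) \<and>
             (\<forall>i. 1 \<le> i \<and> i \<le> s \<longrightarrow> stable G (P i)) \<and>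
             (\<forall>i. s + 1 \<le> i \<and> i < l \<longrightarrow> clique G (P i))) \<longrightarrow> G \<in> F))"

definition red :: "nat graph set \<Rightarrow> nat graph set" where
  "red F = {J. graph J \<and> reduced F J}"

definition s_star :: "nat \<Rightarrow> 'a graph \<Rightarrow> bool" where
  "s_star s G \<longleftrightarrow> (\<exists>S \<subseteq> verts G. card S \<le> s \<and>
     (clique G (verts G - S) \<or> stable G (verts G - S)) \<and>
     (\<forall>v\<in>S. (\<forall>u\<in>verts G - S. adj G v u) \<or> (\<forall>u\<in>verts G - S. \<not> adj G v u)))"

definition critical :: "nat \<Rightarrow> 'a graph \<Rightarrow> bool" where
  "critical s H \<longleftrightarrow> (\<exists>n0. \<forall>K\<in>red (Forb H). card (verts K) \<ge> n0 \<longrightarrow> s_star s K)"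

definition K1 :: "nat graph" where "K1 = \<lparr>verts = {0}, adj = (\<lambda>_ _. False)\<rparr>"
definition S3 :: "nat graph" where "S3 = \<lparr>verts = {0,1,2}, adj = (\<lambda>_ _. False)\<rparr>"
definition C4 :: "nat graph" where
  "C4 = \<lparr>verts = {0,1,2,3}, adj = (\<lambda>x y. x \<in> {0,1,2,3} \<and> y \<in> {0,1,2,3} \<and>
        ((x + 1) mod 4 = y \<or> (y + 1) mod 4 = x))\<rparr>"
text \<open>Complement of the path 0-1-2: single edge 0-2, vertex 1 isolated.\<close>
definition P3bar :: "nat graph" where
  "P3bar = \<lparr>verts = {0,1,2}, adj = (\<lambda>x y. {x, y} = {0, 2} \<and> x \<noteq> y)\<rparr>"

definition iota :: "nat graph \<Rightarrow> 'a graph \<Rightarrow> bool" where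
  "iota J G \<longleftrightarrow> graph G \<and> has_induced J G"

definition union_complete :: "nat graph \<Rightarrow> 'a graph \<Rightarrow> bool" where
  "union_complete J G \<longleftrightarrow> (\<exists>A B. A \<inter> B = {} \<and> A \<union> B = verts G \<and>
     (\<forall>x\<in>A. \<forall>y\<in>B. \<not> adj G x y) \<and> iota J (induced G A) \<and> clique G B)"

definition join_complete :: "nat graph \<Rightarrow> 'a graph \<Rightarrow> bool" where
  "join_complete J G \<longleftrightarrow> (\<exists>A B. A \<inter> B = {} \<and> A \<union> B = verts G \<and>
     (\<forall>x\<in>A. \<forall>y\<in>B. adj G x y) \<and> iota J (induced G A) \<and> clique G B)"

definition ARS2_part :: "nat \<Rightarrow> 'a graph \<Rightarrow> ('a graph \<Rightarrow> bool) \<Rightarrow> bool" where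
  "ARS2_part l H Fam \<longleftrightarrow> (\<exists>P. ipartition (verts H) l P \<and> Fam (induced H (P 0)) \<and>
     (\<forall>i. 1 \<le> i \<and> i < l \<longrightarrow> clique H (P i)))"

definition ARS_graph :: "nat \<Rightarrow> 'a graph \<Rightarrow> bool" where
  "ARS_graph l H \<longleftrightarrow> 0 < l \<and>
    \<comment> \<open>ARS1\<close>
    (\<forall>s. 1 \<le> s \<and> s \<le> l \<longrightarrow> st_partitionable H s (l - s)) \<and>
    \<comment> \<open>ARS2\<close>
    ARS2_part l H (union_complete K1) \<and> ARS2_part l H (join_complete S3) \<and>
    ARS2_part l H (join_complete C4) \<and> ARS2_part l H (join_complete P3bar) \<and>
    \<comment> \<open>ARS3 and ARS4\<close>
    (\<exists>X0. partition_on (verts H) X0 \<and> card X0 = l \<and>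
       (\<exists>A B a1 a2 b1 b2. A \<in> X0 \<and> B \<in> X0 \<and> A \<noteq> B \<and>
          nonedges (induced H A) = {{a1, a2}} \<and> nonedges (induced H B) = {{b1, b2}} \<and>
          stable H {a1, a2, b1, b2} \<and>
          (\<forall>X\<in>X0 - {A, B}. clique H X)) \<and>
       (\<forall>\<X>. partition_on (verts H) \<X> \<and> card \<X> = l \<and> \<X> \<noteq> X0 \<longrightarrow>
          (\<exists>X\<in>\<X>. card (nonedges (induced H X)) \<ge> 2)))"

end

theory Submission
  imports Defs "HOL-Library.Ramsey"
begin


lemma adj_induced[simp]: "adj (induced G X) x y \<longleftrightarrow> x \<in> X \<and> y \<in> X \<and> adj G x y"
  by (simp add: induced_def)
lemma verts_induced[simp]: "verts (induced G X) = X"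
  by (simp add: induced_def)

definition emb_map :: "('a \<Rightarrow> 'b) \<Rightarrow> 'a graph \<Rightarrow> 'b graph \<Rightarrow> bool" where
  "emb_map \<phi> K J \<longleftrightarrow> inj_on \<phi> (verts K) \<and> \<phi> ` verts K \<subseteq> verts J \<and>
     (\<forall>x\<in>verts K. \<forall>y\<in>verts K. adj K x y \<longleftrightarrow> adj J (\<phi> x) (\<phi> y))"

lemma emb_has_induced:
  assumes "emb_map \<phi> K J" shows "has_induced J K"
proof -
  let ?X = "\<phi> ` verts K"
  let ?f = "inv_into (verts K) \<phi>"
  have inj: "inj_on \<phi> (verts K)" using assms by (simp add: emb_map_def)
  have b: "bij_betw ?f ?X (verts K)"
    using inj by (simp add: bij_betw_inv_into inj_on_imp_bij_betw)
  have "\<forall>x\<in>?X. \<forall>y\<in>?X. adj (induced J ?X) x y \<longleftrightarrow> adj K (?f x) (?f y)"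
  proof (intro ballI)
    fix x y assume x: "x \<in> ?X" and y: "y \<in> ?X"
    have "x = \<phi> (?f x)" "y = \<phi> (?f y)" using x y by (simp_all add: f_inv_into_f)
    moreover have "?f x \<in> verts K" "?f y \<in> verts K" using x y by (simp_all add: inv_into_into)
    ultimately show "adj (induced J ?X) x y \<longleftrightarrow> adj K (?f x) (?f y)"
      using assms x y unfolding emb_map_def by simp
  qed
  then have "iso (induced J ?X) K" unfolding iso_def verts_induced using b by blast
  moreover have "?X \<subseteq> verts J" using assms by (simp add: emb_map_def)
  ultimately show ?thesis unfolding has_induced_def by blast
qed

lemma has_induced_emb:
  assumes "has_induced J K" shows "\<exists>\<phi>. emb_map \<phi> K J"
proof -
  obtain X h where X: "X \<subseteq> verts J" and b: "bij_betw h X (verts K)"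
    and a: "\<forall>x\<in>X. \<forall>y\<in>X. adj (induced J X) x y \<longleftrightarrow> adj K (h x) (h y)"
  proof -
    from assms obtain X where X: "X \<subseteq> verts J" and i: "iso (induced J X) K"
      unfolding has_induced_def by blast
    from i obtain h where "bij_betw h X (verts K)"
      "\<forall>x\<in>X. \<forall>y\<in>X. adj (induced J X) x y \<longleftrightarrow> adj K (h x) (h y)"
      unfolding iso_def verts_induced by blast
    with X that show ?thesis by blast
  qed
  let ?\<phi> = "inv_into X h"
  have b2: "bij_betw ?\<phi> (verts K) X" using b by (rule bij_betw_inv_into)
  have "emb_map ?\<phi> K J"
    unfolding emb_map_def
  proof (intro conjI ballI)
    show "inj_on ?\<phi> (verts K)" using b2 bij_betw_def by blast
    show "?\<phi> ` verts K \<subseteq> verts J" using b2 X unfolding bij_betw_def by simp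
  next
    fix x y assume x: "x \<in> verts K" and y: "y \<in> verts K"
    have hx: "h (?\<phi> x) = x" "h (?\<phi> y) = y" using x y b by (simp_all add: bij_betw_inv_into_right)
    have m: "?\<phi> x \<in> X" "?\<phi> y \<in> X" using x y b2 bij_betwE by blast+
    have "adj (induced J X) (?\<phi> x) (?\<phi> y) \<longleftrightarrow> adj K (h (?\<phi> x)) (h (?\<phi> y))"
      using a m by blast
    then show "adj K x y \<longleftrightarrow> adj J (?\<phi> x) (?\<phi> y)"
      using m by (simp only: hx adj_induced simp_thms)
  qed
  then show ?thesis by blast
qed

lemma emb_comp:
  assumes "emb_map \<phi> K J" "emb_map \<psi> J L" shows "emb_map (\<psi> \<circ> \<phi>) K L"
proof -
  have i1: "inj_on \<phi> (verts K)" and s1: "\<phi> ` verts K \<subseteq> verts J"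
    and i2: "inj_on \<psi> (verts J)" and s2: "\<psi> ` verts J \<subseteq> verts L"
    using assms unfolding emb_map_def by auto
  have "inj_on (\<psi> \<circ> \<phi>) (verts K)"
    using i1 i2 s1 by (meson comp_inj_on inj_on_subset)
  moreover have "(\<psi> \<circ> \<phi>) ` verts K \<subseteq> verts L" using s1 s2 by auto
  moreover have "\<forall>x\<in>verts K. \<forall>y\<in>verts K. adj K x y \<longleftrightarrow> adj L ((\<psi> \<circ> \<phi>) x) ((\<psi> \<circ> \<phi>) y)"
    using assms s1 unfolding emb_map_def by (simp add: image_subset_iff)
  ultimately show ?thesis unfolding emb_map_def by blast
qed



definition copy_of :: "'a graph \<Rightarrow> ('a \<Rightarrow> nat) \<Rightarrow> nat graph" where
  "copy_of H f = \<lparr>verts = f ` verts H, adj = (\<lambda>x y. x \<in> f ` verts H \<and> y \<in> f ` verts H \<and>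
      adj H (inv_into (verts H) f x) (inv_into (verts H) f y))\<rparr>"

lemma copy_verts[simp]: "verts (copy_of H f) = f ` verts H"
  by (simp add: copy_of_def)

lemma copy_adj:
  assumes "inj_on f (verts H)" "x \<in> verts H" "y \<in> verts H"
  shows "adj (copy_of H f) (f x) (f y) \<longleftrightarrow> adj H x y"
  using assms by (simp add: copy_of_def)

lemma copy_graph:
  assumes "graph H" "inj_on f (verts H)" shows "graph (copy_of H f)"
  using assms unfolding graph_def copy_of_def
  by (auto simp: inv_into_into intro: inv_into_injective) (metis f_inv_into_f)

lemma copy_emb:
  assumes "inj_on f (verts H)" shows "emb_map f H (copy_of H f)"
  using assms unfolding emb_map_def by (simp add: copy_adj)

lemma copy_has:
  assumes "inj_on f (verts H)" shows "has_induced (copy_of H f) H"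
  using copy_emb[OF assms] by (rule emb_has_induced)

lemma exists_inj_nat:
  assumes "graph H" obtains f :: "'a \<Rightarrow> nat" where "inj_on f (verts H)"
proof -
  have "finite (verts H)" using assms by (simp add: graph_def)
  from finite_imp_inj_to_nat_seg[OF this] obtain f :: "'a \<Rightarrow> nat" where "inj_on f (verts H)"
    by (elim exE conjE)
  then show ?thesis by (rule that)
qed

lemma copy_stable:
  assumes "inj_on f (verts H)" "X \<subseteq> verts H" "stable H X"
  shows "stable (copy_of H f) (f ` X)"
  unfolding stable_def
proof (intro ballI)
  fix x y assume "x \<in> f ` X" "y \<in> f ` X"
  then obtain a b where ab: "a \<in> X" "b \<in> X" "x = f a" "y = f b" by blast
  then have "a \<in> verts H" "b \<in> verts H" using assms(2) by auto
  then have "adj (copy_of H f) x y \<longleftrightarrow> adj H a b" using ab copy_adj[OF assms(1)] by simp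
  then show "\<not> adj (copy_of H f) x y"
    using assms(3) ab unfolding stable_def by simp
qed

lemma copy_clique:
  assumes "inj_on f (verts H)" "X \<subseteq> verts H" "Defs.clique H X"
  shows "Defs.clique (copy_of H f) (f ` X)"
  unfolding Defs.clique_def
proof (intro ballI impI)
  fix x y assume "x \<in> f ` X" "y \<in> f ` X" "x \<noteq> y"
  then obtain a b where ab: "a \<in> X" "b \<in> X" "x = f a" "y = f b" "a \<noteq> b" by blast
  then have "a \<in> verts H" "b \<in> verts H" using assms(2) by auto
  then have "adj (copy_of H f) x y \<longleftrightarrow> adj H a b" using ab copy_adj[OF assms(1)] by simp
  then show "adj (copy_of H f) x y"
    using assms(3) ab unfolding Defs.clique_def by simp
qed

lemma ipartition_sub: "ipartition V l P \<Longrightarrow> i < l \<Longrightarrow> P i \<subseteq> V"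
  unfolding ipartition_def by blast

lemma copy_ipartition:
  assumes "inj_on f (verts H)" "ipartition (verts H) l P"
  shows "ipartition (f ` verts H) l (\<lambda>i. f ` P i)"
proof -
  have "(\<Union>i<l. f ` P i) = f ` verts H"
    using assms(2) unfolding ipartition_def by blast
  moreover have "f ` P i \<inter> f ` P j = {}" if "i < l" "j < l" "i \<noteq> j" for i j
  proof -
    have "P i \<inter> P j = {}" using assms(2) that unfolding ipartition_def by blast
    moreover have "P i \<subseteq> verts H" "P j \<subseteq> verts H" using assms(2) that ipartition_sub by blast+
    ultimately show ?thesis using assms(1) by (metis image_empty inj_on_image_Int)
  qed
  ultimately show ?thesis unfolding ipartition_def by blast
qed

lemma copy_induced_emb:
  assumes "inj_on f (verts H)" "X \<subseteq> verts H"
  shows "emb_map (inv_into (verts H) f) (induced (copy_of H f) (f ` X)) (induced H X)"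
  unfolding emb_map_def
proof (intro conjI ballI)
  show "inj_on (inv_into (verts H) f) (verts (induced (copy_of H f) (f ` X)))"
    using assms(2) by (simp add: inj_on_inv_into image_mono)
  show "inv_into (verts H) f ` verts (induced (copy_of H f) (f ` X)) \<subseteq> verts (induced H X)"
    using assms by (auto simp: inv_into_f_f subset_iff)
next
  fix x y assume "x \<in> verts (induced (copy_of H f) (f ` X))" "y \<in> verts (induced (copy_of H f) (f ` X))"
  then obtain a b where ab: "a \<in> X" "b \<in> X" "x = f a" "y = f b" by auto
  then have "a \<in> verts H" "b \<in> verts H" using assms by auto
  then show "adj (induced (copy_of H f) (f ` X)) x y \<longleftrightarrow>
        adj (induced H X) (inv_into (verts H) f x) (inv_into (verts H) f y)"
    using ab assms by (simp add: copy_adj inv_into_f_f)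
qed

lemma key_contra:
  fixes H :: "'a graph" and J :: "nat graph"
  assumes H: "graph H"
    and R: "\<forall>G :: nat graph. graph G \<longrightarrow>
        (\<exists>P. ipartition (verts G) l P \<and> has_induced J (induced G (P 0)) \<and>
             (\<forall>i. 1 \<le> i \<and> i \<le> s \<longrightarrow> stable G (P i)) \<and>
             (\<forall>i. s + 1 \<le> i \<and> i < l \<longrightarrow> Defs.clique G (P i))) \<longrightarrow> G \<in> Forb H"
    and sl: "s + 1 \<le> l"
    and Q: "ipartition (verts H) l Q"
    and E: "emb_map \<phi> (induced H (Q 0)) J"
    and St: "\<forall>i. 1 \<le> i \<and> i \<le> s \<longrightarrow> stable H (Q i)"
    and Cl: "\<forall>i. s + 1 \<le> i \<and> i < l \<longrightarrow> Defs.clique H (Q i)"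
  shows False
proof -
  obtain f :: "'a \<Rightarrow> nat" where f: "inj_on f (verts H)" using exists_inj_nat H by blast
  let ?G = "copy_of H f"
  have sub: "\<And>i. i < l \<Longrightarrow> Q i \<subseteq> verts H" using Q ipartition_sub by blast
  have "?G \<in> Forb H"
  proof (rule R[rule_format])
    show "graph ?G" using copy_graph H f by blast
    show "\<exists>P. ipartition (verts ?G) l P \<and> has_induced J (induced ?G (P 0)) \<and>
             (\<forall>i. 1 \<le> i \<and> i \<le> s \<longrightarrow> stable ?G (P i)) \<and>
             (\<forall>i. s + 1 \<le> i \<and> i < l \<longrightarrow> Defs.clique ?G (P i))"
    proof (intro exI conjI allI impI)
      show "ipartition (verts ?G) l (\<lambda>i. f ` Q i)"
        using copy_ipartition[OF f Q] by simp
      have "emb_map (\<phi> \<circ> inv_into (verts H) f) (induced ?G (f ` Q 0)) J"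
        using emb_comp[OF copy_induced_emb[OF f sub] E] sl by simp
      then show "has_induced J (induced ?G (f ` Q 0))" by (rule emb_has_induced)
    next
      fix i assume "1 \<le> i \<and> i \<le> s"
      then show "stable ?G (f ` Q i)" using St sub sl copy_stable[OF f] by simp
    next
      fix i assume "s + 1 \<le> i \<and> i < l"
      then show "Defs.clique ?G (f ` Q i)" using Cl sub copy_clique[OF f] by simp
    qed
  qed
  then show False using copy_has[OF f] by (simp add: Forb_def)
qed

lemma hst_contra:
  fixes H :: "'a graph"
  assumes H: "graph H" and S: "Hst s t \<subseteq> Forb H" and P: "st_partitionable H s t"
  shows False
proof -
  obtain f :: "'a \<Rightarrow> nat" where f: "inj_on f (verts H)" using exists_inj_nat H by blast
  let ?G = "copy_of H f"
  obtain Q where Q: "ipartition (verts H) (s + t) Q" and St: "\<forall>i<s. stable H (Q i)"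
    and Cl: "\<forall>i. s \<le> i \<and> i < s + t \<longrightarrow> Defs.clique H (Q i)"
    using P unfolding st_partitionable_def by blast
  have sub: "\<And>i. i < s + t \<Longrightarrow> Q i \<subseteq> verts H" using Q ipartition_sub by blast
  have "st_partitionable ?G s t" unfolding st_partitionable_def
  proof (intro exI conjI allI impI)
    show "ipartition (verts ?G) (s + t) (\<lambda>i. f ` Q i)"
      using copy_ipartition[OF f Q] by simp
  next
    fix i assume "i < s" then show "stable ?G (f ` Q i)" using St sub copy_stable[OF f] by simp
  next
    fix i assume "s \<le> i \<and> i < s + t" then show "Defs.clique ?G (f ` Q i)" using Cl sub copy_clique[OF f] by simp
  qed
  then have "?G \<in> Hst s t" using copy_graph[OF H f] by (simp add: Hst_def)
  then show False using S copy_has[OF f] by (auto simp: Forb_def)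
qed



lemma pull_ipartition:
  assumes "emb_map \<phi> H G" "ipartition (verts G) k P"
  shows "ipartition (verts H) k (\<lambda>i. \<phi> -` P i \<inter> verts H)"
proof -
  have im: "\<phi> ` verts H \<subseteq> verts G" using assms(1) by (simp add: emb_map_def)
  have "(\<Union>i<k. \<phi> -` P i \<inter> verts H) = verts H"
  proof
    show "(\<Union>i<k. \<phi> -` P i \<inter> verts H) \<subseteq> verts H" by blast
    show "verts H \<subseteq> (\<Union>i<k. \<phi> -` P i \<inter> verts H)"
    proof
      fix x assume x: "x \<in> verts H"
      then have "\<phi> x \<in> verts G" using im by blast
      moreover have "verts G = (\<Union>i<k. P i)" using assms(2) unfolding ipartition_def by simp
      ultimately obtain i where "i < k" "\<phi> x \<in> P i" by blast
      then show "x \<in> (\<Union>i<k. \<phi> -` P i \<inter> verts H)" using x by blast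
    qed
  qed
  moreover have "(\<phi> -` P i \<inter> verts H) \<inter> (\<phi> -` P j \<inter> verts H) = {}"
    if "i < k" "j < k" "i \<noteq> j" for i j
  proof -
    have "P i \<inter> P j = {}" using assms(2) that unfolding ipartition_def by simp
    then show ?thesis by blast
  qed
  ultimately show ?thesis unfolding ipartition_def by simp
qed

lemma pull_clique:
  assumes "emb_map \<phi> H G" "Defs.clique G X"
  shows "Defs.clique H (\<phi> -` X \<inter> verts H)"
  unfolding Defs.clique_def
proof (intro ballI impI)
  fix x y assume x: "x \<in> \<phi> -` X \<inter> verts H" and y: "y \<in> \<phi> -` X \<inter> verts H" and "x \<noteq> y"
  then have "\<phi> x \<noteq> \<phi> y" using assms(1) unfolding emb_map_def inj_on_def by blast
  then have "adj G (\<phi> x) (\<phi> y)" using assms(2) x y unfolding Defs.clique_def by blast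
  then show "adj H x y" using assms(1) x y unfolding emb_map_def by blast
qed

lemma part_disj:
  assumes "partition_on V P" "X \<in> P" "Y \<in> P" "X \<noteq> Y" shows "X \<inter> Y = {}"
proof -
  have "disjoint P" using assms(1) by (rule partition_onD2)
  then have "disjnt X Y" using assms(2-4) unfolding pairwise_def by blast
  then show ?thesis by (simp add: disjnt_def)
qed

lemma card_partition_le:
  assumes "finite V" "partition_on V X0" shows "card X0 \<le> card V"
proof -
  let ?f = "\<lambda>X. SOME x. x \<in> X"
  have ne: "\<And>X. X \<in> X0 \<Longrightarrow> ?f X \<in> X"
  proof -
    fix X assume "X \<in> X0"
    then have "X \<noteq> {}" using partition_onD3[OF assms(2)] by blast
    then show "?f X \<in> X" by (simp add: some_in_eq)
  qed
  have "inj_on ?f X0"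
  proof (rule inj_onI)
    fix X Y assume XY: "X \<in> X0" "Y \<in> X0" "?f X = ?f Y"
    then have "?f X \<in> X \<inter> Y" using ne[OF XY(1)] ne[OF XY(2)] by simp
    then show "X = Y" using part_disj[OF assms(2) XY(1,2)] by blast
  qed
  moreover have "?f ` X0 \<subseteq> V"
  proof
    fix y assume "y \<in> ?f ` X0"
    then obtain X where "X \<in> X0" "y = ?f X" by blast
    then have "y \<in> \<Union>X0" using ne by blast
    then show "y \<in> V" using partition_onD1[OF assms(2)] by simp
  qed
  ultimately show ?thesis using assms(1) card_inj_on_le by blast
qed

lemma clique_subset: "Defs.clique H X \<Longrightarrow> Y \<subseteq> X \<Longrightarrow> Defs.clique H Y"
  unfolding Defs.clique_def by blast

lemma split_step:
  assumes fin: "finite V" and P: "partition_on V \<P>" and C: "\<forall>X\<in>\<P>. Defs.clique H X"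
    and lt: "card \<P> < card V"
  shows "\<exists>\<Q>. partition_on V \<Q> \<and> card \<Q> = Suc (card \<P>) \<and> (\<forall>X\<in>\<Q>. Defs.clique H X)"
proof -
  have finP: "finite \<P>" using fin P finite_elements by blast
  have VU: "V = \<Union>\<P>" using P partition_onD1 by blast
  have sub: "\<And>X. X \<in> \<P> \<Longrightarrow> X \<subseteq> V" using VU by blast
  have disj: "\<And>X Y. X \<in> \<P> \<Longrightarrow> Y \<in> \<P> \<Longrightarrow> X \<noteq> Y \<Longrightarrow> X \<inter> Y = {}"
    using part_disj[OF P] by blast
  have "\<exists>X\<in>\<P>. \<exists>x\<in>X. X - {x} \<noteq> {}"
  proof (rule ccontr)
    assume "\<not> ?thesis"
    then have c0: "\<And>X x. X \<in> \<P> \<Longrightarrow> x \<in> X \<Longrightarrow> X \<subseteq> {x}" by blast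
    have c1: "card X \<le> 1" if XP: "X \<in> \<P>" for X
    proof (cases "X = {}")
      case True then show ?thesis by simp
    next
      case False
      then obtain x where "x \<in> X" by blast
      then have "X \<subseteq> {x}" using c0 XP by blast
      then have "card X \<le> card {x}" by (intro card_mono) simp_all
      then show ?thesis by simp
    qed
    have "card (\<Union>\<P>) \<le> sum card \<P>" by (rule card_Union_le_sum_card)
    then have "card V \<le> sum card \<P>" using VU by simp
    also have "\<dots> \<le> sum (\<lambda>_. 1) \<P>" using c1 by (meson sum_mono)
    also have "\<dots> = card \<P>" by simp
    finally show False using lt by simp
  qed
  then obtain X x where X: "X \<in> \<P>" and x: "x \<in> X" and ne: "X - {x} \<noteq> {}" by blast
  define \<Q> where "\<Q> = insert {x} (insert (X - {x}) (\<P> - {X}))"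
  have n1: "{x} \<notin> insert (X - {x}) (\<P> - {X})"
  proof
    assume "{x} \<in> insert (X - {x}) (\<P> - {X})"
    moreover have "{x} \<noteq> X - {x}" by blast
    ultimately have "{x} \<in> \<P>" "{x} \<noteq> X" by auto
    then show False using disj[OF _ X] x by blast
  qed
  have n2: "X - {x} \<notin> \<P> - {X}"
  proof
    assume "X - {x} \<in> \<P> - {X}"
    then have "X - {x} \<in> \<P>" "X - {x} \<noteq> X" by auto
    then show False using disj[OF _ X] ne by blast
  qed
  have "card \<Q> = Suc (card \<P>)"
  proof -
    have "card (\<P> - {X}) = card \<P> - 1" using X finP by simp
    moreover have "card \<P> \<noteq> 0" using X finP by auto
    moreover have "card \<Q> = Suc (Suc (card (\<P> - {X})))" unfolding \<Q>_def using n1 n2 finP by simp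
    ultimately show ?thesis by linarith
  qed
  moreover have "partition_on V \<Q>"
  proof (rule partition_onI)
    have "\<Union>\<Q> = \<Union>\<P>" unfolding \<Q>_def using X x by blast
    then show "\<Union>\<Q> = V" using VU by simp
    have "{} \<notin> \<P>" using P by (rule partition_onD3)
    then show "{} \<notin> \<Q>" unfolding \<Q>_def using ne by blast
    fix p q assume pq: "p \<in> \<Q>" "q \<in> \<Q>" "p \<noteq> q"
    have D: "\<And>Y. Y \<in> \<P> \<Longrightarrow> Y \<noteq> X \<Longrightarrow> Y \<inter> X = {}" using disj X by blast
    from pq(1) have p3: "p = {x} \<or> p = X - {x} \<or> (p \<in> \<P> \<and> p \<noteq> X)" unfolding \<Q>_def by blast
    from pq(2) have q3: "q = {x} \<or> q = X - {x} \<or> (q \<in> \<P> \<and> q \<noteq> X)" unfolding \<Q>_def by blast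
    show "disjnt p q" unfolding disjnt_def
    proof -
      from p3 q3 show "p \<inter> q = {}"
      proof (elim disjE conjE)
      qed (use pq(3) D disj x in blast)+
    qed
  qed
  moreover have "\<forall>Y\<in>\<Q>. Defs.clique H Y"
  proof
    fix Y assume "Y \<in> \<Q>"
    then have "Y \<subseteq> X \<or> Y \<in> \<P>" unfolding \<Q>_def using x by blast
    then show "Defs.clique H Y" using C X clique_subset by blast
  qed
  ultimately show ?thesis by blast
qed

lemma refine_cliques:
  assumes "finite V" "partition_on V \<P>" "\<forall>X\<in>\<P>. Defs.clique H X" "card \<P> \<le> k" "k \<le> card V"
  shows "\<exists>\<Q>. partition_on V \<Q> \<and> card \<Q> = k \<and> (\<forall>X\<in>\<Q>. Defs.clique H X)"
  using assms
proof (induction "k - card \<P>" arbitrary: \<P>)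
  case 0
  then show ?case by (metis diff_is_0_eq le_antisym)
next
  case (Suc d)
  then have "card \<P> < card V" by linarith
  then obtain \<Q> where Q: "partition_on V \<Q>" "card \<Q> = Suc (card \<P>)" "\<forall>X\<in>\<Q>. Defs.clique H X"
    using split_step Suc.prems by blast
  have d: "d = k - card \<Q>" using Q(2) Suc.hyps(2) by linarith
  have ck: "card \<Q> \<le> k" using Q(2) Suc.hyps(2) by linarith
  show ?case
    using Suc.hyps(1)[OF d Suc.prems(1) Q(1) Q(3) ck Suc.prems(5)] .
qed



lemma clique_nonedges: "Defs.clique H X \<Longrightarrow> nonedges (induced H X) = {}"
  unfolding nonedges_def Defs.clique_def by auto

lemma st_pad:
  assumes "st_partitionable H s0 t0" "s0 + t0 \<le> s + t" "s0 \<le> s" "s0 < s \<Longrightarrow> t0 = 0"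
  shows "st_partitionable H s t"
proof -
  obtain P where P: "ipartition (verts H) (s0 + t0) P" and St: "\<forall>i<s0. stable H (P i)"
    and Cl: "\<forall>i. s0 \<le> i \<and> i < s0 + t0 \<longrightarrow> Defs.clique H (P i)"
    using assms(1) unfolding st_partitionable_def by blast
  define Q where "Q = (\<lambda>i. if i < s0 + t0 then P i else {})"
  have "(\<Union>i<s + t. Q i) = (\<Union>i<s0 + t0. P i)"
  proof
    show "(\<Union>i<s + t. Q i) \<subseteq> (\<Union>i<s0 + t0. P i)" unfolding Q_def by auto
    show "(\<Union>i<s0 + t0. P i) \<subseteq> (\<Union>i<s + t. Q i)" unfolding Q_def using assms(2) by force
  qed
  then have "ipartition (verts H) (s + t) Q"
    using P unfolding ipartition_def Q_def by auto
  moreover have "\<forall>i<s. stable H (Q i)"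
  proof (intro allI impI)
    fix i assume "i < s"
    show "stable H (Q i)"
    proof (cases "i < s0")
      case True then show ?thesis using St assms(2) unfolding Q_def by auto
    next
      case False
      then have "t0 = 0" using assms(4) \<open>i < s\<close> by linarith
      then show ?thesis using False unfolding Q_def stable_def by auto
    qed
  qed
  moreover have "\<forall>i. s \<le> i \<and> i < s + t \<longrightarrow> Defs.clique H (Q i)"
  proof (intro allI impI)
    fix i assume i: "s \<le> i \<and> i < s + t"
    show "Defs.clique H (Q i)"
    proof (cases "i < s0 + t0")
      case True then show ?thesis using Cl i assms(3) unfolding Q_def by auto
    next
      case False then show ?thesis unfolding Q_def Defs.clique_def by auto
    qed
  qed
  ultimately show ?thesis unfolding st_partitionable_def by blast
qed

lemma has_K1_card:
  assumes "has_induced K1 G" shows "card (verts G) \<le> 1"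
proof -
  obtain \<psi> where e: "emb_map \<psi> G K1" using has_induced_emb[OF assms] by blast
  then have "inj_on \<psi> (verts G)" "\<psi> ` verts G \<subseteq> {0}" unfolding emb_map_def K1_def by auto
  then have "card (verts G) \<le> card {0::nat}" using card_inj_on_le by blast
  then show ?thesis by simp
qed

lemma card_le1_clique:
  assumes "finite X" "card X \<le> 1" shows "Defs.clique H X"
proof -
  have "\<forall>x\<in>X. \<forall>y\<in>X. x = y" using assms card_le_Suc0_iff_eq[OF assms(1)] by simp
  then show ?thesis unfolding Defs.clique_def by blast
qed

lemma induced_clique: "Defs.clique (induced H Y) X \<Longrightarrow> X \<subseteq> Y \<Longrightarrow> Defs.clique H X"
  unfolding Defs.clique_def by auto

lemma K1_partition:
  assumes H: "graph H" and A: "ARS2_part l H (union_complete K1)" and l: "0 < l"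
  shows "st_partitionable H 0 (Suc l)"
proof -
  obtain P where P: "ipartition (verts H) l P" and U: "union_complete K1 (induced H (P 0))"
    and Cl: "\<forall>i. 1 \<le> i \<and> i < l \<longrightarrow> Defs.clique H (P i)"
    using A unfolding ARS2_part_def by blast
  obtain A B where AB: "A \<inter> B = {}" "A \<union> B = P 0"
    and io: "iota K1 (induced (induced H (P 0)) A)" and cB: "Defs.clique (induced H (P 0)) B"
    using U unfolding union_complete_def by auto
  have P0: "P 0 \<subseteq> verts H" using ipartition_sub[OF P l] .
  have fV: "finite (verts H)" using H unfolding graph_def by simp
  have "A \<subseteq> verts H" using P0 AB by blast
  then have finA: "finite A" using fV finite_subset by blast
  have "card A \<le> 1" using has_K1_card io unfolding iota_def by fastforce
  then have cA: "Defs.clique H A" using card_le1_clique finA by blast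
  have cB': "Defs.clique H B" using induced_clique[OF cB] AB by blast
  define Q where "Q = (\<lambda>i. if i = 0 then A else if i = l then B else P i)"
  have "(\<Union>i<Suc l. Q i) = (\<Union>i<l. P i)"
  proof
    show "(\<Union>i<Suc l. Q i) \<subseteq> (\<Union>i<l. P i)"
    proof
      fix x assume "x \<in> (\<Union>i<Suc l. Q i)"
      then obtain i where i: "i < Suc l" "x \<in> Q i" by blast
      show "x \<in> (\<Union>i<l. P i)"
      proof (cases "i = 0 \<or> i = l")
        case True then have "Q i \<subseteq> P 0" using AB unfolding Q_def by auto
        then have "x \<in> P 0" using i by blast
        then show ?thesis using l by blast
      next
        case False then show ?thesis using i unfolding Q_def by auto
      qed
    qed
    show "(\<Union>i<l. P i) \<subseteq> (\<Union>i<Suc l. Q i)"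
    proof
      fix x assume "x \<in> (\<Union>i<l. P i)"
      then obtain i where i: "i < l" "x \<in> P i" by blast
      show "x \<in> (\<Union>i<Suc l. Q i)"
      proof (cases "i = 0")
        case True
        then have "x \<in> A \<or> x \<in> B" using i AB by blast
        moreover have "Q 0 = A" "Q l = B" using l unfolding Q_def by auto
        ultimately have "x \<in> Q 0 \<or> x \<in> Q l" by simp
        moreover have "0 < Suc l" "l < Suc l" by simp_all
        ultimately show ?thesis by blast
      next
        case False
        then have "Q i = P i" using i unfolding Q_def by auto
        moreover have "i < Suc l" using i by simp
        ultimately show ?thesis using i by blast
      qed
    qed
  qed
  moreover have "Q i \<inter> Q j = {}" if "i < Suc l" "j < Suc l" "i \<noteq> j" for i j
  proof -
    have D: "\<And>a b. a < l \<Longrightarrow> b < l \<Longrightarrow> a \<noteq> b \<Longrightarrow> P a \<inter> P b = {}"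
      using P unfolding ipartition_def by simp
    define \<sigma> where "\<sigma> = (\<lambda>k::nat. if k = l then 0 else k)"
    have sub: "\<And>k. k < Suc l \<Longrightarrow> Q k \<subseteq> P (\<sigma> k)"
      unfolding Q_def \<sigma>_def using AB by auto
    show ?thesis
    proof (cases "(i = 0 \<and> j = l) \<or> (i = l \<and> j = 0)")
      case True
      then have "Q i \<inter> Q j = A \<inter> B" using l unfolding Q_def by auto
      then show ?thesis using AB(1) by simp
    next
      case False
      have "\<sigma> i \<noteq> \<sigma> j" using False that l unfolding \<sigma>_def by auto
      moreover have "\<sigma> i < l" "\<sigma> j < l" using that l unfolding \<sigma>_def by auto
      ultimately have "P (\<sigma> i) \<inter> P (\<sigma> j) = {}" using D by blast
      moreover have "Q i \<subseteq> P (\<sigma> i)" "Q j \<subseteq> P (\<sigma> j)" using sub that by auto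
      ultimately show ?thesis by blast
    qed
  qed
  ultimately have "ipartition (verts H) (0 + Suc l) Q" using P unfolding ipartition_def by simp
  moreover have "\<forall>i. 0 \<le> i \<and> i < 0 + Suc l \<longrightarrow> Defs.clique H (Q i)"
    using cA cB' Cl unfolding Q_def by auto
  ultimately show ?thesis unfolding st_partitionable_def by auto
qed



lemma ARS_1: "ARS_graph l H \<Longrightarrow> 1 \<le> s \<Longrightarrow> s \<le> l \<Longrightarrow> st_partitionable H s (l - s)"
  by (simp add: ARS_graph_def)
lemma ARS_K1: "ARS_graph l H \<Longrightarrow> ARS2_part l H (union_complete K1)"
  by (simp add: ARS_graph_def)
lemma ARS_S3: "ARS_graph l H \<Longrightarrow> ARS2_part l H (join_complete S3)"
  by (simp add: ARS_graph_def)
lemma ARS_C4: "ARS_graph l H \<Longrightarrow> ARS2_part l H (join_complete C4)"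
  by (simp add: ARS_graph_def)
lemma ARS_P3: "ARS_graph l H \<Longrightarrow> ARS2_part l H (join_complete P3bar)"
  by (simp add: ARS_graph_def)
lemma ARS_l0: "ARS_graph l H \<Longrightarrow> 0 < l"
  by (simp add: ARS_graph_def)
lemma ARS_34: "ARS_graph l H \<Longrightarrow> (\<exists>X0. partition_on (verts H) X0 \<and> card X0 = l \<and>
       (\<exists>A B a1 a2 b1 b2. A \<in> X0 \<and> B \<in> X0 \<and> A \<noteq> B \<and>
          nonedges (induced H A) = {{a1, a2}} \<and> nonedges (induced H B) = {{b1, b2}} \<and>
          stable H {a1, a2, b1, b2} \<and>
          (\<forall>X\<in>X0 - {A, B}. Defs.clique H X)) \<and>
       (\<forall>\<X>. partition_on (verts H) \<X> \<and> card \<X> = l \<and> \<X> \<noteq> X0 \<longrightarrow>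
          (\<exists>X\<in>\<X>. card (nonedges (induced H X)) \<ge> 2)))"
  unfolding ARS_graph_def by (elim conjE) assumption

lemma no_clique_partition:
  assumes H: "graph H" and A: "ARS_graph l H"
  shows "\<not> st_partitionable H 0 l"
proof
  assume "st_partitionable H 0 l"
  then obtain P where P: "ipartition (verts H) l P"
    and Cl: "\<forall>i. i < l \<longrightarrow> Defs.clique H (P i)"
    unfolding st_partitionable_def by auto
  have fV: "finite (verts H)" using H unfolding graph_def by simp
  obtain X0 A0 a1 a2 where X0: "partition_on (verts H) X0" "card X0 = l"
    and A0: "A0 \<in> X0" "nonedges (induced H A0) = {{a1, a2}}"
    and ARS4: "\<forall>\<X>. partition_on (verts H) \<X> \<and> card \<X> = l \<and> \<X> \<noteq> X0 \<longrightarrow>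
          (\<exists>X\<in>\<X>. card (nonedges (induced H X)) \<ge> 2)"
  proof -
    from ARS_34[OF A] obtain X0 where H0: "partition_on (verts H) X0 \<and> card X0 = l \<and>
       (\<exists>A B a1 a2 b1 b2. A \<in> X0 \<and> B \<in> X0 \<and> A \<noteq> B \<and>
          nonedges (induced H A) = {{a1, a2}} \<and> nonedges (induced H B) = {{b1, b2}} \<and>
          stable H {a1, a2, b1, b2} \<and>
          (\<forall>X\<in>X0 - {A, B}. Defs.clique H X)) \<and>
       (\<forall>\<X>. partition_on (verts H) \<X> \<and> card \<X> = l \<and> \<X> \<noteq> X0 \<longrightarrow>
          (\<exists>X\<in>\<X>. card (nonedges (induced H X)) \<ge> 2))" ..
    from H0 have E: "\<exists>A B a1 a2 b1 b2. A \<in> X0 \<and> B \<in> X0 \<and> A \<noteq> B \<and>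
          nonedges (induced H A) = {{a1, a2}} \<and> nonedges (induced H B) = {{b1, b2}} \<and>
          stable H {a1, a2, b1, b2} \<and>
          (\<forall>X\<in>X0 - {A, B}. Defs.clique H X)" by (elim conjE)
    from E obtain A0 a1 a2 where a: "A0 \<in> X0" and n: "nonedges (induced H A0) = {{a1, a2}}"
      by (elim exE conjE) (rule that)
    from H0 have p: "partition_on (verts H) X0" by (elim conjE)
    from H0 have c: "card X0 = l" by (elim conjE)
    from H0 have f: "\<forall>\<X>. partition_on (verts H) \<X> \<and> card \<X> = l \<and> \<X> \<noteq> X0 \<longrightarrow>
          (\<exists>X\<in>\<X>. card (nonedges (induced H X)) \<ge> 2)" by (elim conjE)
    show ?thesis by (rule that[OF p c a n f])
  qed
  define \<P> where "\<P> = P ` {..<l} - {{}}"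
  have pP: "partition_on (verts H) \<P>"
  proof (rule partition_onI)
    have "\<Union>\<P> = (\<Union>i<l. P i)" unfolding \<P>_def by auto
    then show "\<Union>\<P> = verts H" using P unfolding ipartition_def by simp
    show "{} \<notin> \<P>" unfolding \<P>_def by blast
    fix p q assume pq: "p \<in> \<P>" "q \<in> \<P>" "p \<noteq> q"
    then obtain i j where "i < l" "j < l" "p = P i" "q = P j" unfolding \<P>_def by blast
    moreover then have "i \<noteq> j" using pq(3) by blast
    ultimately have "p \<inter> q = {}" using P unfolding ipartition_def by simp
    then show "disjnt p q" by (simp add: disjnt_def)
  qed
  have "card \<P> \<le> card (P ` {..<l})" unfolding \<P>_def by (rule card_mono) simp_all
  also have "\<dots> \<le> l" using card_image_le[of "{..<l}" P] by simp
  finally have cP: "card \<P> \<le> l" .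
  have cV: "l \<le> card (verts H)" using card_partition_le[OF fV X0(1)] X0(2) by simp
  have CP: "\<forall>X\<in>\<P>. Defs.clique H X" unfolding \<P>_def using Cl by blast
  obtain \<Q> where Q: "partition_on (verts H) \<Q>" "card \<Q> = l" "\<forall>X\<in>\<Q>. Defs.clique H X"
    using refine_cliques[OF fV pP CP cP cV] by blast
  have "\<forall>X\<in>\<Q>. card (nonedges (induced H X)) = 0"
  proof
    fix X assume "X \<in> \<Q>"
    then have "Defs.clique H X" using Q(3) by blast
    from clique_nonedges[OF this] show "card (nonedges (induced H X)) = 0" by simp
  qed
  have "\<Q> = X0"
  proof (rule ccontr)
    assume "\<Q> \<noteq> X0"
    then obtain X where "X \<in> \<Q>" "card (nonedges (induced H X)) \<ge> 2" using ARS4 Q(1,2) by blast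
    then show False using \<open>\<forall>X\<in>\<Q>. card (nonedges (induced H X)) = 0\<close> by auto
  qed
  then have "Defs.clique H A0" using A0(1) Q(3) by blast
  then have "nonedges (induced H A0) = {}" by (rule clique_nonedges)
  then show False using A0(2) by simp
qed

lemma chi_eq:
  assumes H: "graph H" and A: "ARS_graph l H"
  shows "chi_c (Forb H) = l"
proof -
  have l0: "0 < l" using ARS_l0[OF A] .
  define S where "S = {l'. \<exists>s\<le>l'. Hst s (l' - s) \<subseteq> Forb H}"
  have lS: "l \<in> S"
  proof -
    have "Hst 0 l \<subseteq> Forb H"
    proof
      fix G assume G: "G \<in> Hst 0 l"
      show "G \<in> Forb H"
      proof (rule ccontr)
        assume "G \<notin> Forb H"
        then have "has_induced G H" using G unfolding Forb_def Hst_def by auto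
        then obtain \<phi> where e: "emb_map \<phi> H G" using has_induced_emb by blast
        obtain P where P: "ipartition (verts G) l P"
          and Cl: "\<forall>i. i < l \<longrightarrow> Defs.clique G (P i)"
          using G unfolding Hst_def st_partitionable_def by auto
        have "st_partitionable H 0 l" unfolding st_partitionable_def
          using pull_ipartition[OF e P] pull_clique[OF e] Cl by auto
        then show False using no_clique_partition[OF H A] by blast
      qed
    qed
    then have "\<exists>s\<le>l. Hst s (l - s) \<subseteq> Forb H" by (intro exI[of _ 0]) simp
    then show ?thesis unfolding S_def by simp
  qed
  have bound: "l' \<le> l" if "l' \<in> S" for l'
  proof (rule ccontr)
    assume "\<not> l' \<le> l"
    then have ll: "l < l'" by simp
    from that have "\<exists>s\<le>l'. Hst s (l' - s) \<subseteq> Forb H" unfolding S_def by simp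
    then obtain s where s: "s \<le> l'" "Hst s (l' - s) \<subseteq> Forb H" by blast
    have "st_partitionable H s (l' - s)"
    proof (cases "s = 0")
      case True
      have "ARS2_part l H (union_complete K1)" using ARS_K1[OF A] .
      then have K: "st_partitionable H 0 (Suc l)" using K1_partition[OF H _ l0] by blast
      show ?thesis using st_pad[OF K, of s "l' - s"] True ll s(1) by simp
    next
      case False
      define s0 where "s0 = min s l"
      have "1 \<le> s0 \<and> s0 \<le> l" using False l0 unfolding s0_def by auto
      then have "st_partitionable H s0 (l - s0)" using ARS_1[OF A] by blast
      then show ?thesis
        by (rule st_pad) (use s ll in \<open>auto simp: s0_def\<close>)
    qed
    then show False using hst_contra[OF H s(2)] by blast
  qed
  have "finite S" using bound by (meson finite_nat_set_iff_bounded_le)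
  then have "Max S = l" using lS bound by (intro Max_eqI) auto
  then show ?thesis unfolding chi_c_def S_def by simp
qed



lemma g_sym: "graph G \<Longrightarrow> adj G x y \<longleftrightarrow> adj G y x"
  unfolding graph_def by blast
lemma g_irr: "graph G \<Longrightarrow> \<not> adj G x x"
  unfolding graph_def by blast
lemma g_in: "graph G \<Longrightarrow> adj G x y \<Longrightarrow> x \<in> verts G \<and> y \<in> verts G"
  unfolding graph_def by blast
lemma g_fin: "graph G \<Longrightarrow> finite (verts G)"
  unfolding graph_def by blast

lemma induced_induced: "A \<subseteq> Y \<Longrightarrow> induced (induced H Y) A = induced H A"
  unfolding induced_def by auto

lemma emb_stable_into:
  assumes "finite X" "stable H X" "R \<subseteq> verts J" "stable J R" "finite R" "card X \<le> card R"
  shows "\<exists>\<phi>. emb_map \<phi> (induced H X) J"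
proof -
  obtain f where f: "f ` X \<subseteq> R" "inj_on f X" using card_le_inj[OF assms(1) assms(5) assms(6)] by blast
  have "emb_map f (induced H X) J" unfolding emb_map_def
  proof (intro conjI ballI)
    show "inj_on f (verts (induced H X))" using f by simp
    show "f ` verts (induced H X) \<subseteq> verts J" using f assms(3) by auto
  next
    fix x y assume "x \<in> verts (induced H X)" "y \<in> verts (induced H X)"
    then have "x \<in> X" "y \<in> X" by auto
    moreover then have "f x \<in> R" "f y \<in> R" using f by auto
    ultimately show "adj (induced H X) x y = adj J (f x) (f y)"
      using assms(2,4) unfolding stable_def by simp
  qed
  then show ?thesis by blast
qed

lemma emb_clique_into:
  assumes "graph H" "graph J" "finite X" "Defs.clique H X" "R \<subseteq> verts J" "Defs.clique J R"
    "finite R" "card X \<le> card R"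
  shows "\<exists>\<phi>. emb_map \<phi> (induced H X) J"
proof -
  obtain f where f: "f ` X \<subseteq> R" "inj_on f X" using card_le_inj[OF assms(3) assms(7) assms(8)] by blast
  have "emb_map f (induced H X) J" unfolding emb_map_def
  proof (intro conjI ballI)
    show "inj_on f (verts (induced H X))" using f by simp
    show "f ` verts (induced H X) \<subseteq> verts J" using f assms(5) by auto
  next
    fix x y assume "x \<in> verts (induced H X)" "y \<in> verts (induced H X)"
    then have xy: "x \<in> X" "y \<in> X" by auto
    moreover then have "f x \<in> R" "f y \<in> R" using f by auto
    moreover have "x = y \<longleftrightarrow> f x = f y" using f(2) xy inj_on_eq_iff by metis
    ultimately show "adj (induced H X) x y = adj J (f x) (f y)"
      using assms(4,6) g_irr[OF assms(1)] g_irr[OF assms(2)] unfolding Defs.clique_def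
      by (cases "x = y") auto
  qed
  then show ?thesis by blast
qed

lemma emb_join:
  assumes H: "graph H" and J: "graph J"
    and AB: "A \<inter> B = {}" and fB: "finite B"
    and \<alpha>: "emb_map \<alpha> (induced H A) J"
    and cB: "Defs.clique H B" and CJ: "C \<subseteq> verts J" and cC: "Defs.clique J C" and fC: "finite C"
    and card: "card B \<le> card C" and disj: "\<alpha> ` A \<inter> C = {}"
    and cr1: "\<forall>x\<in>A. \<forall>y\<in>B. adj H x y = c" and cr2: "\<forall>x\<in>\<alpha> ` A. \<forall>y\<in>C. adj J x y = c"
  shows "\<exists>\<phi>. emb_map \<phi> (induced H (A \<union> B)) J"
proof -
  obtain \<psi> where \<psi>: "\<psi> ` B \<subseteq> C" "inj_on \<psi> B" using card_le_inj[OF fB fC card] by blast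
  define \<phi> where "\<phi> = (\<lambda>x. if x \<in> A then \<alpha> x else \<psi> x)"
  have ai: "inj_on \<alpha> A" and aJ: "\<alpha> ` A \<subseteq> verts J"
    and aa: "\<And>x y. x \<in> A \<Longrightarrow> y \<in> A \<Longrightarrow> adj H x y = adj J (\<alpha> x) (\<alpha> y)"
    using \<alpha> unfolding emb_map_def by auto
  have \<phi>A: "\<And>x. x \<in> A \<Longrightarrow> \<phi> x = \<alpha> x" and \<phi>B: "\<And>x. x \<in> B \<Longrightarrow> \<phi> x = \<psi> x"
    unfolding \<phi>_def using AB by auto
  have "emb_map \<phi> (induced H (A \<union> B)) J" unfolding emb_map_def verts_induced
  proof (intro conjI ballI)
    show "inj_on \<phi> (A \<union> B)"
    proof (rule inj_onI)
      fix x y assume x: "x \<in> A \<union> B" and y: "y \<in> A \<union> B" and e: "\<phi> x = \<phi> y"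
      show "x = y"
      proof (cases "x \<in> A")
        case xA: True
        show ?thesis
        proof (cases "y \<in> A")
          case True then show ?thesis using xA e \<phi>A ai inj_on_eq_iff by metis
        next
          case False
          then have "y \<in> B" using y by blast
          then have "\<phi> y \<in> C" using \<phi>B \<psi> by auto
          moreover have "\<phi> x \<in> \<alpha> ` A" using xA \<phi>A by auto
          ultimately show ?thesis using e disj by auto
        qed
      next
        case xB: False
        then have xB: "x \<in> B" using x by blast
        show ?thesis
        proof (cases "y \<in> A")
          case True
          then have "\<phi> y \<in> \<alpha> ` A" using \<phi>A by auto
          moreover have "\<phi> x \<in> C" using xB \<phi>B \<psi> by auto
          ultimately show ?thesis using e disj by auto
        next
          case False
          then have "y \<in> B" using y by blast
          then show ?thesis using xB e \<phi>B \<psi>(2) inj_on_eq_iff by metis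
        qed
      qed
    qed
    show "\<phi> ` (A \<union> B) \<subseteq> verts J"
    proof
      fix z assume "z \<in> \<phi> ` (A \<union> B)"
      then obtain x where "x \<in> A \<union> B" "z = \<phi> x" by blast
      then show "z \<in> verts J" using \<phi>A \<phi>B aJ \<psi>(1) CJ by (cases "x \<in> A") auto
    qed
  next
    fix x y assume x: "x \<in> A \<union> B" and y: "y \<in> A \<union> B"
    show "adj (induced H (A \<union> B)) x y = adj J (\<phi> x) (\<phi> y)"
    proof (cases "x \<in> A")
      case xA: True
      show ?thesis
      proof (cases "y \<in> A")
        case True then show ?thesis using xA aa \<phi>A x y by simp
      next
        case False
        then have yB: "y \<in> B" using y by blast
        have "\<phi> y \<in> C" using yB \<phi>B \<psi> by auto
        moreover have "\<phi> x \<in> \<alpha> ` A" using xA \<phi>A by auto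
        ultimately have "adj J (\<phi> x) (\<phi> y) = c" using cr2 by blast
        moreover have "adj H x y = c" using cr1 xA yB by blast
        ultimately show ?thesis using x y by simp
      qed
    next
      case xB: False
      then have xB: "x \<in> B" using x by blast
      show ?thesis
      proof (cases "y \<in> A")
        case yA: True
        have "\<phi> x \<in> C" using xB \<phi>B \<psi> by auto
        moreover have "\<phi> y \<in> \<alpha> ` A" using yA \<phi>A by auto
        ultimately have "adj J (\<phi> y) (\<phi> x) = c" using cr2 by blast
        then have "adj J (\<phi> x) (\<phi> y) = c" using g_sym[OF J] by metis
        moreover have "adj H y x = c" using cr1 yA xB by blast
        then have "adj H x y = c" using g_sym[OF H] by metis
        ultimately show ?thesis using x y by simp
      next
        case False
        then have yB: "y \<in> B" using y by blast
        have m: "\<phi> x \<in> C" "\<phi> y \<in> C" using xB yB \<phi>B \<psi> by auto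
        have "x = y \<longleftrightarrow> \<phi> x = \<phi> y" using xB yB \<phi>B \<psi>(2) inj_on_eq_iff by metis
        then show ?thesis using m xB yB cB cC g_irr[OF H] g_irr[OF J] x y unfolding Defs.clique_def
          by (cases "x = y") auto
      qed
    qed
  qed
  then show ?thesis by blast
qed



lemma three:
  assumes J: "graph J" and v: "x \<in> verts J" "y \<in> verts J" "z \<in> verts J"
    and d: "x \<noteq> y" "x \<noteq> z" "y \<noteq> z" and n: "\<not> adj J x y" "\<not> adj J x z"
  shows "(\<exists>\<phi>. emb_map \<phi> S3 J \<and> \<phi> ` verts S3 \<subseteq> {x, y, z}) \<or>
         (\<exists>\<phi>. emb_map \<phi> P3bar J \<and> \<phi> ` verts P3bar \<subseteq> {x, y, z})"
proof -
  have n': "\<not> adj J y x" "\<not> adj J z x" using n g_sym[OF J] by blast+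
  have irr: "\<And>u. \<not> adj J u u" using g_irr[OF J] .
  show ?thesis
  proof (cases "adj J y z")
    case True
    then have yz: "adj J z y" using g_sym[OF J] by blast
    define \<phi> where "\<phi> = (\<lambda>i::nat. if i = 0 then y else if i = 1 then x else z)"
    have "emb_map \<phi> P3bar J"
      unfolding emb_map_def P3bar_def \<phi>_def
      using v d n n' True yz irr by (auto simp: inj_on_def doubleton_eq_iff)
    moreover have "\<phi> ` verts P3bar \<subseteq> {x, y, z}" unfolding P3bar_def \<phi>_def by auto
    ultimately show ?thesis by blast
  next
    case False
    then have yz: "\<not> adj J z y" using g_sym[OF J] by blast
    define \<phi> where "\<phi> = (\<lambda>i::nat. if i = 0 then x else if i = 1 then y else z)"
    have "emb_map \<phi> S3 J"
      unfolding emb_map_def S3_def \<phi>_def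
      using v d n n' False yz irr by (auto simp: inj_on_def)
    moreover have "\<phi> ` verts S3 \<subseteq> {x, y, z}" unfolding S3_def \<phi>_def by auto
    ultimately show ?thesis by blast
  qed
qed

lemma four_C4:
  assumes J: "graph J" and v: "a \<in> verts J" "b \<in> verts J" "c \<in> verts J" "d \<in> verts J"
    and dist: "a \<noteq> b" "a \<noteq> c" "a \<noteq> d" "b \<noteq> c" "b \<noteq> d" "c \<noteq> d"
    and n: "\<not> adj J a b" "\<not> adj J c d"
    and e: "adj J a c" "adj J a d" "adj J b c" "adj J b d"
  shows "\<exists>\<phi>. emb_map \<phi> C4 J \<and> \<phi> ` verts C4 \<subseteq> {a, b, c, d}"
proof -
  have n': "\<not> adj J b a" "\<not> adj J d c" using n g_sym[OF J] by blast+
  have e': "adj J c a" "adj J d a" "adj J c b" "adj J d b" using e g_sym[OF J] by blast+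
  have irr: "\<And>u. \<not> adj J u u" using g_irr[OF J] .
  define \<phi> where "\<phi> = (\<lambda>i::nat. if i = 0 then a else if i = 1 then c else if i = 2 then b else d)"
  have "emb_map \<phi> C4 J"
    unfolding emb_map_def C4_def \<phi>_def
    using v dist n n' e e' irr by (auto simp: inj_on_def)
  moreover have "\<phi> ` verts C4 \<subseteq> {a, b, c, d}" unfolding C4_def \<phi>_def by auto
  ultimately show ?thesis by blast
qed



definition has_F :: "nat graph \<Rightarrow> nat set \<Rightarrow> bool" where
  "has_F J W \<longleftrightarrow> (\<exists>\<phi>. emb_map \<phi> S3 J \<and> \<phi> ` verts S3 \<subseteq> W) \<or>
     (\<exists>\<phi>. emb_map \<phi> P3bar J \<and> \<phi> ` verts P3bar \<subseteq> W) \<or>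
     (\<exists>\<phi>. emb_map \<phi> C4 J \<and> \<phi> ` verts C4 \<subseteq> W)"

lemma has_F_mono: "has_F J W \<Longrightarrow> W \<subseteq> W' \<Longrightarrow> has_F J W'"
  unfolding has_F_def by (meson order_trans)

lemma three_F:
  assumes "graph J" "x \<in> verts J" "y \<in> verts J" "z \<in> verts J"
    "x \<noteq> y" "x \<noteq> z" "y \<noteq> z" "\<not> adj J x y" "\<not> adj J x z" "{x, y, z} \<subseteq> W"
  shows "has_F J W"
proof -
  have "has_F J {x, y, z}" using three[OF assms(1-9)] unfolding has_F_def by blast
  then show ?thesis using has_F_mono assms(10) by blast
qed

lemma find_F:
  assumes J: "graph J" and v: "a \<in> verts J" "b \<in> verts J" "c \<in> verts J" "d \<in> verts J"
    and ab: "a \<noteq> b" and cd: "c \<noteq> d" and n: "\<not> adj J a b" "\<not> adj J c d"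
    and ne: "{a, b} \<noteq> {c, d}"
  shows "has_F J {a, b, c, d}"
proof -
  have n': "\<not> adj J b a" "\<not> adj J d c" using n g_sym[OF J] by blast+
  show ?thesis
  proof (cases "a = c \<or> a = d \<or> b = c \<or> b = d")
    case True
    then consider "a = c" | "a = d" | "b = c" | "b = d" by blast
    then show ?thesis
    proof cases
      case 1
      then have "b \<noteq> d" using ne by auto
      then show ?thesis using three_F[OF J, of a b d] v ab cd n 1 by auto
    next
      case 2
      then have "b \<noteq> c" using ne by auto
      then show ?thesis using three_F[OF J, of a b c] v ab cd n n' 2 by auto
    next
      case 3
      then have "a \<noteq> d" using ne by auto
      then show ?thesis using three_F[OF J, of b a d] v ab cd n n' 3 by auto
    next
      case 4
      then have "a \<noteq> c" using ne by auto
      then show ?thesis using three_F[OF J, of b a c] v ab cd n n' 4 by auto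
    qed
  next
    case False
    then have dist: "a \<noteq> c" "a \<noteq> d" "b \<noteq> c" "b \<noteq> d" by auto
    show ?thesis
    proof (cases "adj J a c \<and> adj J a d \<and> adj J b c \<and> adj J b d")
      case True
      then have "\<exists>\<phi>. emb_map \<phi> C4 J \<and> \<phi> ` verts C4 \<subseteq> {a, b, c, d}"
        using four_C4[OF J v ab dist(1,2,3,4) cd n] by blast
      then show ?thesis unfolding has_F_def by blast
    next
      case False
      then consider "\<not> adj J a c" | "\<not> adj J a d" | "\<not> adj J b c" | "\<not> adj J b d" by blast
      then show ?thesis
      proof cases
        case 1 then show ?thesis using three_F[OF J, of a b c] v ab dist n by auto
      next
        case 2 then show ?thesis using three_F[OF J, of a b d] v ab dist n by auto
      next
        case 3 then show ?thesis using three_F[OF J, of b a c] v ab dist n' by auto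
      next
        case 4 then show ?thesis using three_F[OF J, of b a d] v ab dist n' by auto
      qed
    qed
  qed
qed



lemma join_case:
  fixes H :: "'a graph" and J :: "nat graph" and F :: "nat graph"
  assumes H: "graph H" and J: "graph J" and A2: "ARS2_part l H (join_complete F)" and l: "0 < l"
    and \<phi>: "emb_map \<phi> F J" "\<phi> ` verts F \<subseteq> W"
    and C: "C \<subseteq> verts J" "Defs.clique J C" "finite C" "card (verts H) \<le> card C"
    and WC: "W \<inter> C = {}" "\<forall>x\<in>W. \<forall>y\<in>C. adj J x y"
  shows "\<exists>Q \<psi>. ipartition (verts H) l Q \<and> emb_map \<psi> (induced H (Q 0)) J \<and>
            (\<forall>i. 1 \<le> i \<and> i < l \<longrightarrow> Defs.clique H (Q i))"
proof -
  obtain P where P: "ipartition (verts H) l P" and U: "join_complete F (induced H (P 0))"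
    and Cl: "\<forall>i. 1 \<le> i \<and> i < l \<longrightarrow> Defs.clique H (P i)"
    using A2 unfolding ARS2_part_def by blast
  obtain A B where AB: "A \<inter> B = {}" "A \<union> B = P 0"
    and cr: "\<forall>x\<in>A. \<forall>y\<in>B. adj (induced H (P 0)) x y"
    and io: "iota F (induced (induced H (P 0)) A)" and cB: "Defs.clique (induced H (P 0)) B"
    using U unfolding join_complete_def verts_induced by blast
  have P0: "P 0 \<subseteq> verts H" using ipartition_sub[OF P l] .
  have AP: "A \<subseteq> P 0" using AB by blast
  have "has_induced F (induced H A)" using io induced_induced[OF AP] unfolding iota_def by simp
  then obtain \<beta> where \<beta>: "emb_map \<beta> (induced H A) F" using has_induced_emb by blast
  have \<alpha>: "emb_map (\<phi> \<circ> \<beta>) (induced H A) J" using emb_comp[OF \<beta> \<phi>(1)] .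
  have \<alpha>W: "(\<phi> \<circ> \<beta>) ` A \<subseteq> W" using \<beta> \<phi>(2) unfolding emb_map_def by auto
  have cB': "Defs.clique H B" using induced_clique[OF cB] AB by blast
  have BV: "B \<subseteq> verts H" using AB P0 by blast
  have fB: "finite B" using finite_subset[OF BV g_fin[OF H]] .
  have "card B \<le> card (verts H)" using card_mono[OF g_fin[OF H] BV] .
  then have cBC: "card B \<le> card C" using C(4) by linarith
  have dj: "(\<phi> \<circ> \<beta>) ` A \<inter> C = {}" using \<alpha>W WC(1) by blast
  have cr1: "\<forall>x\<in>A. \<forall>y\<in>B. adj H x y = True" using cr by simp
  have cr2: "\<forall>x\<in>(\<phi> \<circ> \<beta>) ` A. \<forall>y\<in>C. adj J x y = True" using WC(2) \<alpha>W by blast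
  obtain \<psi> where "emb_map \<psi> (induced H (A \<union> B)) J"
    using emb_join[OF H J AB(1) fB \<alpha> cB' C(1) C(2) C(3) cBC dj cr1 cr2] by blast
  then have "emb_map \<psi> (induced H (P 0)) J" using AB(2) by simp
  then show ?thesis using P Cl by blast
qed

lemma K1_case:
  fixes H :: "'a graph" and J :: "nat graph"
  assumes H: "graph H" and J: "graph J" and A2: "ARS2_part l H (union_complete K1)" and l: "0 < l"
    and v: "v \<in> verts J"
    and C: "C \<subseteq> verts J" "Defs.clique J C" "finite C" "card (verts H) \<le> card C"
    and vC: "v \<notin> C" "\<forall>y\<in>C. \<not> adj J v y"
  shows "\<exists>Q \<psi>. ipartition (verts H) l Q \<and> emb_map \<psi> (induced H (Q 0)) J \<and>
            (\<forall>i. 1 \<le> i \<and> i < l \<longrightarrow> Defs.clique H (Q i))"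
proof -
  obtain P where P: "ipartition (verts H) l P" and U: "union_complete K1 (induced H (P 0))"
    and Cl: "\<forall>i. 1 \<le> i \<and> i < l \<longrightarrow> Defs.clique H (P i)"
    using A2 unfolding ARS2_part_def by blast
  obtain A B where AB: "A \<inter> B = {}" "A \<union> B = P 0"
    and cr: "\<forall>x\<in>A. \<forall>y\<in>B. \<not> adj (induced H (P 0)) x y"
    and io: "iota K1 (induced (induced H (P 0)) A)" and cB: "Defs.clique (induced H (P 0)) B"
    using U unfolding union_complete_def verts_induced by blast
  have P0: "P 0 \<subseteq> verts H" using ipartition_sub[OF P l] .
  have AP: "A \<subseteq> P 0" using AB by blast
  have AV: "A \<subseteq> verts H" using AP P0 by blast
  have fA: "finite A" using finite_subset[OF AV g_fin[OF H]] .
  have "has_induced K1 (induced H A)" using io induced_induced[OF AP] unfolding iota_def by simp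
  then have "card A \<le> 1" using has_K1_card by fastforce
  then have A1: "\<forall>x\<in>A. \<forall>y\<in>A. x = y" using card_le_Suc0_iff_eq[OF fA] by simp
  have \<alpha>: "emb_map (\<lambda>_. v) (induced H A) J" unfolding emb_map_def
  proof (intro conjI ballI)
    show "inj_on (\<lambda>_. v) (verts (induced H A))" using A1 by (simp add: inj_on_def)
    show "(\<lambda>_. v) ` verts (induced H A) \<subseteq> verts J" using v by auto
  next
    fix x y assume "x \<in> verts (induced H A)" "y \<in> verts (induced H A)"
    then have "x = y" using A1 by simp
    then show "adj (induced H A) x y = adj J v v" using g_irr[OF H] g_irr[OF J] by simp
  qed
  have cB': "Defs.clique H B" using induced_clique[OF cB] AB by blast
  have BV: "B \<subseteq> verts H" using AB P0 by blast
  have fB: "finite B" using finite_subset[OF BV g_fin[OF H]] .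
  have "card B \<le> card (verts H)" using card_mono[OF g_fin[OF H] BV] .
  then have cBC: "card B \<le> card C" using C(4) by linarith
  have dj: "(\<lambda>_. v) ` A \<inter> C = {}" using vC(1) by blast
  have cr1: "\<forall>x\<in>A. \<forall>y\<in>B. adj H x y = False" using cr AB by auto
  have cr2: "\<forall>x\<in>(\<lambda>_. v) ` A. \<forall>y\<in>C. adj J x y = False" using vC(2) by blast
  obtain \<psi> where "emb_map \<psi> (induced H (A \<union> B)) J"
    using emb_join[OF H J AB(1) fB \<alpha> cB' C(1) C(2) C(3) cBC dj cr1 cr2] by blast
  then have "emb_map \<psi> (induced H (P 0)) J" using AB(2) by simp
  then show ?thesis using P Cl by blast
qed

lemma ipartition_perm:
  assumes P: "ipartition V l P" and inj: "inj_on \<pi> {..<l}" and im: "\<pi> ` {..<l} = {..<l}"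
  shows "ipartition V l (\<lambda>i. P (\<pi> i))"
proof -
  have "(\<Union>i<l. P (\<pi> i)) = (\<Union>j\<in>\<pi> ` {..<l}. P j)" by simp
  also have "\<dots> = (\<Union>j<l. P j)" using im by simp
  finally have U: "(\<Union>i<l. P (\<pi> i)) = V" using P unfolding ipartition_def by simp
  have "P (\<pi> i) \<inter> P (\<pi> j) = {}" if "i < l" "j < l" "i \<noteq> j" for i j
  proof -
    have "\<pi> i \<noteq> \<pi> j" using inj that by (simp add: inj_on_eq_iff)
    moreover have "\<pi> i < l" "\<pi> j < l" using im that by auto
    ultimately show ?thesis using P unfolding ipartition_def by simp
  qed
  then show ?thesis using U unfolding ipartition_def by simp
qed

lemma ipartition_rot:
  assumes P: "ipartition V l P" and s: "s < l"
  shows "ipartition V l (\<lambda>i. if i = 0 then P s else if i \<le> s then P (i - 1) else P i)"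
proof -
  define \<pi> where "\<pi> = (\<lambda>i::nat. if i = 0 then s else if i \<le> s then i - 1 else i)"
  have inj: "inj_on \<pi> {..<l}"
    unfolding inj_on_def \<pi>_def by auto
  have "\<pi> ` {..<l} = {..<l}"
  proof
    show "\<pi> ` {..<l} \<subseteq> {..<l}" unfolding \<pi>_def using s by auto
    show "{..<l} \<subseteq> \<pi> ` {..<l}"
    proof
      fix j assume j: "j \<in> {..<l}"
      show "j \<in> \<pi> ` {..<l}"
      proof (cases "j < s")
        case True
        then have "\<pi> (Suc j) = j" "Suc j < l" using s unfolding \<pi>_def by auto
        then show ?thesis by (metis image_eqI lessThan_iff)
      next
        case False
        show ?thesis
        proof (cases "j = s")
          case True
          then have "\<pi> 0 = j" "0 < l" using s unfolding \<pi>_def by auto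
          then show ?thesis by (metis image_eqI lessThan_iff)
        next
          case False
          then have "\<pi> j = j" using \<open>\<not> j < s\<close> unfolding \<pi>_def by auto
          then show ?thesis using j by (metis image_eqI)
        qed
      qed
    qed
  qed
  then have "ipartition V l (\<lambda>i. P (\<pi> i))" using ipartition_perm[OF P inj] by blast
  moreover have "(\<lambda>i. P (\<pi> i)) = (\<lambda>i. if i = 0 then P s else if i \<le> s then P (i - 1) else P i)"
    unfolding \<pi>_def by (rule ext) simp
  ultimately show ?thesis by simp
qed



definition redP :: "nat graph \<Rightarrow> nat \<Rightarrow> nat \<Rightarrow> 'a graph \<Rightarrow> bool" where
  "redP J l s H \<longleftrightarrow> (\<forall>G :: nat graph. graph G \<longrightarrow>
        (\<exists>P. ipartition (verts G) l P \<and> has_induced J (induced G (P 0)) \<and>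
             (\<forall>i. 1 \<le> i \<and> i \<le> s \<longrightarrow> stable G (P i)) \<and>
             (\<forall>i. s + 1 \<le> i \<and> i < l \<longrightarrow> Defs.clique G (P i))) \<longrightarrow> G \<in> Forb H)"

lemma reduced_redP:
  assumes "reduced (Forb H) J" "chi_c (Forb H) = l"
  shows "\<exists>s. s + 1 \<le> l \<and> redP J l s H"
  using assms unfolding reduced_def redP_def Let_def by simp

lemma key_contra':
  assumes H: "graph H" and R: "redP J l s H" and sl: "s + 1 \<le> l"
    and Q: "ipartition (verts H) l Q"
    and E: "emb_map \<phi> (induced H (Q 0)) J"
    and St: "\<forall>i. 1 \<le> i \<and> i \<le> s \<longrightarrow> stable H (Q i)"
    and Cl: "\<forall>i. s + 1 \<le> i \<and> i < l \<longrightarrow> Defs.clique H (Q i)"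
  shows False
  using key_contra[OF H R[unfolded redP_def] sl Q E St Cl] .

lemma contra0:
  assumes H: "graph H" and R: "redP J l 0 H" and l: "0 < l"
    and ex: "\<exists>Q \<psi>. ipartition (verts H) l Q \<and> emb_map \<psi> (induced H (Q 0)) J \<and>
            (\<forall>i. 1 \<le> i \<and> i < l \<longrightarrow> Defs.clique H (Q i))"
  shows False
proof -
  obtain Q \<psi> where Q: "ipartition (verts H) l Q" "emb_map \<psi> (induced H (Q 0)) J"
    "\<forall>i. 1 \<le> i \<and> i < l \<longrightarrow> Defs.clique H (Q i)" using ex by blast
  have sl: "0 + 1 \<le> l" using l by simp
  show False
    by (rule key_contra'[OF H R sl Q(1) Q(2)]) (use Q(3) in auto)
qed

lemma ramsey_clique:
  assumes J: "graph J" and c: "Ramsey.clique R {{x, y} | x y. adj J x y}"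
  shows "Defs.clique J R"
  unfolding Defs.clique_def
proof (intro ballI impI)
  fix v w assume "v \<in> R" "w \<in> R" "v \<noteq> w"
  then have "{v, w} \<in> {{x, y} | x y. adj J x y}" using c unfolding Ramsey.clique_def by blast
  then obtain x y where "{v, w} = {x, y}" "adj J x y" by blast
  then show "adj J v w" using g_sym[OF J] by (metis doubleton_eq_iff)
qed

lemma ramsey_indep:
  assumes J: "graph J" and c: "indep R {{x, y} | x y. adj J x y}"
  shows "stable J R"
  unfolding stable_def
proof (intro ballI)
  fix v w assume "v \<in> R" "w \<in> R"
  show "\<not> adj J v w"
  proof (cases "v = w")
    case True then show ?thesis using g_irr[OF J] by simp
  next
    case False
    then have "{v, w} \<notin> {{x, y} | x y. adj J x y}" using c \<open>v \<in> R\<close> \<open>w \<in> R\<close> unfolding indep_def by blast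
    then show ?thesis by blast
  qed
qed



lemma two_nonedges:
  assumes "\<not> card (nonedges J) \<le> 1"
  obtains a b c d where "a \<in> verts J" "b \<in> verts J" "c \<in> verts J" "d \<in> verts J"
    "a \<noteq> b" "c \<noteq> d" "\<not> adj J a b" "\<not> adj J c d" "{a, b} \<noteq> {c, d}"
proof -
  have f: "finite (nonedges J)" using assms by (metis card.infinite zero_le)
  then have "\<not> (\<forall>x\<in>nonedges J. \<forall>y\<in>nonedges J. x = y)"
    using assms card_le_Suc0_iff_eq[OF f] by simp
  then obtain e1 e2 where e: "e1 \<in> nonedges J" "e2 \<in> nonedges J" "e1 \<noteq> e2" by blast
  from e(1) obtain a b where ab: "e1 = {a, b}" "a \<in> verts J" "b \<in> verts J" "a \<noteq> b" "\<not> adj J a b"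
    unfolding nonedges_def by blast
  from e(2) obtain c d where cd: "e2 = {c, d}" "c \<in> verts J" "d \<in> verts J" "c \<noteq> d" "\<not> adj J c d"
    unfolding nonedges_def by blast
  show ?thesis using that[OF ab(2,3) cd(2,3) ab(4) cd(4) ab(5) cd(5)] e(3) ab(1) cd(1) by blast
qed

lemma clique_case0:
  fixes H :: "'a graph" and J :: "nat graph"
  assumes H: "graph H" and A: "ARS_graph l H" and J: "graph J" and R: "redP J l 0 H"
    and Rs: "Rs \<subseteq> verts J" "Defs.clique J Rs" "card Rs = 5 * card (verts H) + 4"
  shows "card (nonedges J) \<le> 1"
proof (rule ccontr)
  assume "\<not> card (nonedges J) \<le> 1"
  then obtain a b c d where v: "a \<in> verts J" "b \<in> verts J" "c \<in> verts J" "d \<in> verts J"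
    and ab: "a \<noteq> b" and cd: "c \<noteq> d" and n: "\<not> adj J a b" "\<not> adj J c d" and ne: "{a, b} \<noteq> {c, d}"
    by (rule two_nonedges)
  define n where "n = card (verts H)"
  have l: "0 < l" using ARS_l0[OF A] .
  define W where "W = {a, b, c, d}"
  define K0 where "K0 = Rs - W"
  have fJ: "finite (verts J)" using g_fin[OF J] .
  have fRs: "finite Rs" using finite_subset[OF Rs(1) fJ] .
  have cW: "card W \<le> 4" unfolding W_def by (simp add: card_insert_le_m1)
  have "card Rs - card W \<le> card K0" unfolding K0_def using diff_card_le_card_Diff[of W Rs] W_def by simp
  then have cK0: "5 * n \<le> card K0" using cW Rs(3) n_def by linarith
  have K0J: "K0 \<subseteq> verts J" using Rs(1) unfolding K0_def by blast
  have fK0: "finite K0" using finite_subset[OF K0J fJ] .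
  have cK0c: "Defs.clique J K0" using clique_subset[OF Rs(2)] unfolding K0_def by blast
  have WK0: "W \<inter> K0 = {}" unfolding K0_def by blast
  define N where "N = (\<lambda>v. {u \<in> K0. \<not> adj J v u})"
  have NK: "\<And>v. N v \<subseteq> K0" unfolding N_def by blast
  show False
  proof (cases "\<exists>v\<in>W. n \<le> card (N v)")
    case True
    then obtain v where v1: "v \<in> W" "n \<le> card (N v)" by blast
    have vJ: "v \<in> verts J" using v1(1) v unfolding W_def by blast
    have C: "N v \<subseteq> verts J" "Defs.clique J (N v)" "finite (N v)" "card (verts H) \<le> card (N v)"
      using NK[of v] K0J cK0c fK0 v1(2) n_def clique_subset finite_subset by blast+
    have vC: "v \<notin> N v" "\<forall>y\<in>N v. \<not> adj J v y" using v1(1) WK0 NK[of v] unfolding N_def by blast+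
    show False
      using contra0[OF H R l K1_case[OF H J ARS_K1[OF A] l vJ C vC]] .
  next
    case False
    then have small: "\<And>v. v \<in> W \<Longrightarrow> card (N v) \<le> n" by force
    define U where "U = N a \<union> N b \<union> N c \<union> N d"
    define K where "K = K0 - U"
    have fN: "\<And>v. finite (N v)" using NK fK0 finite_subset by blast
    have "card U \<le> card (N a) + card (N b) + card (N c) + card (N d)"
    proof -
      have "card (N a \<union> N b \<union> N c \<union> N d) \<le> card (N a \<union> N b \<union> N c) + card (N d)" by (rule card_Un_le)
      moreover have "card (N a \<union> N b \<union> N c) \<le> card (N a \<union> N b) + card (N c)" by (rule card_Un_le)
      moreover have "card (N a \<union> N b) \<le> card (N a) + card (N b)" by (rule card_Un_le)
      ultimately show ?thesis unfolding U_def by linarith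
    qed
    moreover have "card (N a) \<le> n" "card (N b) \<le> n" "card (N c) \<le> n" "card (N d) \<le> n"
      using small unfolding W_def by auto
    ultimately have cU: "card U \<le> 4 * n" by linarith
    have "card K0 - card U \<le> card K" unfolding K_def using diff_card_le_card_Diff[of U K0] fN U_def by simp
    then have cK: "n \<le> card K" using cK0 cU by linarith
    have KJ: "K \<subseteq> verts J" using K0J unfolding K_def by blast
    have fK: "finite K" using finite_subset[OF KJ fJ] .
    have cKc: "Defs.clique J K" using clique_subset[OF cK0c] unfolding K_def by blast
    have WK: "W \<inter> K = {}" using WK0 unfolding K_def by blast
    have adjWK: "\<forall>x\<in>W. \<forall>y\<in>K. adj J x y"
    proof (intro ballI)
      fix x y assume x: "x \<in> W" and y: "y \<in> K"
      then have "y \<in> K0" "y \<notin> N x" unfolding K_def U_def W_def by auto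
      then show "adj J x y" unfolding N_def by blast
    qed
    have C: "K \<subseteq> verts J" "Defs.clique J K" "finite K" "card (verts H) \<le> card K"
      using KJ cKc fK cK n_def by auto
    have WC: "W \<inter> K = {}" "\<forall>x\<in>W. \<forall>y\<in>K. adj J x y" using WK adjWK by auto
    have "has_F J W" unfolding W_def by (rule find_F[OF J v ab cd n ne])
    then consider (s3) \<phi> where "emb_map \<phi> S3 J" "\<phi> ` verts S3 \<subseteq> W"
      | (p3) \<phi> where "emb_map \<phi> P3bar J" "\<phi> ` verts P3bar \<subseteq> W"
      | (c4) \<phi> where "emb_map \<phi> C4 J" "\<phi> ` verts C4 \<subseteq> W"
      unfolding has_F_def by blast
    then show False
    proof cases
      case s3
      show False using contra0[OF H R l join_case[OF H J ARS_S3[OF A] l s3 C WC]] .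
    next
      case p3
      show False using contra0[OF H R l join_case[OF H J ARS_P3[OF A] l p3 C WC]] .
    next
      case c4
      show False using contra0[OF H R l join_case[OF H J ARS_C4[OF A] l c4 C WC]] .
    qed
  qed
qed



lemma part2:
  fixes H :: "'a graph"
  assumes H: "graph H" and A: "ARS_graph l H"
  shows "\<exists>n0. \<forall>G\<in>red (Forb H). card (verts G) \<ge> n0 \<longrightarrow> card (nonedges G) \<le> 1"
proof -
  define n where "n = card (verts H)"
  define m where "m = 5 * n + 4"
  obtain r where r: "\<forall>(V::nat set) (E::nat set set). finite V \<and> card V \<ge> r \<longrightarrow>
      (\<exists>R\<subseteq>V. card R = m \<and> Ramsey.clique R E \<or> card R = n \<and> indep R E)"
    using ramsey2[of m n] by blast
  have chi: "chi_c (Forb H) = l" by (rule chi_eq[OF H A])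
  show ?thesis
  proof (intro exI ballI impI)
    fix J assume JR: "J \<in> red (Forb H)" and cJ: "r \<le> card (verts J)"
    have J: "graph J" and rd: "reduced (Forb H) J" using JR unfolding red_def by auto
    obtain s where sl: "s + 1 \<le> l" and R: "redP J l s H" using reduced_redP[OF rd chi] by blast
    have fJ: "finite (verts J)" using g_fin[OF J] .
    obtain Rs where Rs: "Rs \<subseteq> verts J"
      "card Rs = m \<and> Ramsey.clique Rs {{x, y} | x y. adj J x y} \<or>
       card Rs = n \<and> indep Rs {{x, y} | x y. adj J x y}"
      using r fJ cJ by blast
    have fRs: "finite Rs" using finite_subset[OF Rs(1) fJ] .
    show "card (nonedges J) \<le> 1"
    proof (cases "card Rs = n \<and> indep Rs {{x, y} | x y. adj J x y}")
      case True
      then have st: "stable J Rs" "card Rs = n" using ramsey_indep[OF J] by auto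
      have "1 \<le> s + 1" "s + 1 \<le> l" using sl by auto
      then have "st_partitionable H (s + 1) (l - (s + 1))" using ARS_1[OF A] by blast
      then obtain P where P: "ipartition (verts H) (s + 1 + (l - (s + 1))) P"
        and St: "\<forall>i<s + 1. stable H (P i)"
        and Cl: "\<forall>i. s + 1 \<le> i \<and> i < s + 1 + (l - (s + 1)) \<longrightarrow> Defs.clique H (P i)"
        unfolding st_partitionable_def by blast
      have eq: "s + 1 + (l - (s + 1)) = l" using sl by simp
      have P': "ipartition (verts H) l P" using P eq by simp
      have P0: "P 0 \<subseteq> verts H" using ipartition_sub[OF P'] sl by simp
      have fP0: "finite (P 0)" using finite_subset[OF P0 g_fin[OF H]] .
      have "card (P 0) \<le> card Rs" using card_mono[OF g_fin[OF H] P0] st(2) n_def by simp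
      then obtain \<psi> where "emb_map \<psi> (induced H (P 0)) J"
        using emb_stable_into[OF fP0 _ Rs(1) st(1) fRs] St by auto
      moreover have "\<forall>i. 1 \<le> i \<and> i \<le> s \<longrightarrow> stable H (P i)" using St by auto
      moreover have "\<forall>i. s + 1 \<le> i \<and> i < l \<longrightarrow> Defs.clique H (P i)" using Cl eq by simp
      ultimately show ?thesis using key_contra'[OF H R sl P'] by blast
    next
      case False
      then have cl: "Defs.clique J Rs" "card Rs = m" using Rs(2) ramsey_clique[OF J] by auto
      show ?thesis
      proof (cases "s = 0")
        case True
        show ?thesis using clique_case0[OF H A J R[unfolded True] Rs(1) cl(1)] cl(2) m_def n_def by simp
      next
        case False
        then have "1 \<le> s" "s \<le> l" using sl by auto
        then have "st_partitionable H s (l - s)" using ARS_1[OF A] by blast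
        then obtain P where P: "ipartition (verts H) (s + (l - s)) P"
          and St: "\<forall>i<s. stable H (P i)"
          and Cl: "\<forall>i. s \<le> i \<and> i < s + (l - s) \<longrightarrow> Defs.clique H (P i)"
          unfolding st_partitionable_def by blast
        have eq: "s + (l - s) = l" using sl by simp
        have P': "ipartition (verts H) l P" using P eq by simp
        have sl': "s < l" using sl by simp
        define Q where "Q = (\<lambda>i. if i = 0 then P s else if i \<le> s then P (i - 1) else P i)"
        have Q: "ipartition (verts H) l Q" unfolding Q_def using ipartition_rot[OF P' sl'] .
        have Ps: "P s \<subseteq> verts H" using ipartition_sub[OF P' sl'] .
        have fPs: "finite (P s)" using finite_subset[OF Ps g_fin[OF H]] .
        have cPs: "Defs.clique H (P s)" using Cl sl' eq by simp
        have "card (P s) \<le> card (verts H)" using card_mono[OF g_fin[OF H] Ps] .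
        then have "card (P s) \<le> card Rs" using cl(2) m_def n_def by simp
        then obtain \<psi> where e: "emb_map \<psi> (induced H (P s)) J"
          using emb_clique_into[OF H J fPs cPs Rs(1) cl(1) fRs] by blast
        have e': "emb_map \<psi> (induced H (Q 0)) J" using e unfolding Q_def by simp
        have St': "\<forall>i. 1 \<le> i \<and> i \<le> s \<longrightarrow> stable H (Q i)"
          unfolding Q_def using St by auto
        have Cl': "\<forall>i. s + 1 \<le> i \<and> i < l \<longrightarrow> Defs.clique H (Q i)"
          unfolding Q_def using Cl eq by auto
        show ?thesis using key_contra'[OF H R sl Q e' St' Cl'] by blast
      qed
    qed
  qed
qed

lemma nonedgeI: "x \<in> verts G \<Longrightarrow> y \<in> verts G \<Longrightarrow> x \<noteq> y \<Longrightarrow> \<not> adj G x y \<Longrightarrow> {x, y} \<in> nonedges G"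
  unfolding nonedges_def by (intro CollectI exI[of _ x] exI[of _ y]) simp

lemma nonedgeE: "e \<in> nonedges G \<Longrightarrow> \<exists>x y. e = {x, y} \<and> x \<in> verts G \<and> y \<in> verts G \<and> x \<noteq> y \<and> \<not> adj G x y"
  unfolding nonedges_def by (elim CollectE exE) blast

lemma part3:
  fixes J :: "nat graph"
  assumes J: "graph J" and c: "card (nonedges J) \<le> 1"
  shows "s_star 2 J"
proof -
  have fJ: "finite (verts J)" using g_fin[OF J] .
  have "finite (nonedges J)"
  proof -
    have "nonedges J \<subseteq> Pow (verts J)"
    proof
      fix e assume "e \<in> nonedges J"
      then obtain x y where "e = {x, y}" "x \<in> verts J" "y \<in> verts J" using nonedgeE by blast
      then show "e \<in> Pow (verts J)" by blast
    qed
    then show ?thesis using fJ finite_subset by blast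
  qed
  then have one: "\<forall>x\<in>nonedges J. \<forall>y\<in>nonedges J. x = y" using c card_le_Suc0_iff_eq[of "nonedges J"] by simp
  show ?thesis
  proof (cases "nonedges J = {}")
    case True
    have "Defs.clique J (verts J)" unfolding Defs.clique_def
    proof (intro ballI impI)
      fix x y assume "x \<in> verts J" "y \<in> verts J" "x \<noteq> y"
      show "adj J x y"
      proof (rule ccontr)
        assume "\<not> adj J x y"
        then have "{x, y} \<in> nonedges J" using nonedgeI \<open>x \<in> verts J\<close> \<open>y \<in> verts J\<close> \<open>x \<noteq> y\<close> by metis
        then show False using True by blast
      qed
    qed
    then show ?thesis unfolding s_star_def by (intro exI[of _ "{}"]) simp
  next
    case False
    then obtain e where e: "e \<in> nonedges J" by blast
    then obtain a b where ab: "e = {a, b}" "a \<in> verts J" "b \<in> verts J" "a \<noteq> b" "\<not> adj J a b"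
      using nonedgeE by blast
    have only: "\<And>x y. x \<in> verts J \<Longrightarrow> y \<in> verts J \<Longrightarrow> x \<noteq> y \<Longrightarrow> \<not> adj J x y \<Longrightarrow> {x, y} = {a, b}"
    proof -
      fix x y assume "x \<in> verts J" "y \<in> verts J" "x \<noteq> y" "\<not> adj J x y"
      then have "{x, y} \<in> nonedges J" by (rule nonedgeI)
      then have "{x, y} = e" using bspec[OF bspec[OF one]] e by metis
      then show "{x, y} = {a, b}" using ab(1) by simp
    qed
    let ?S = "{a, b}"
    have S1: "?S \<subseteq> verts J" using ab by blast
    have S2: "card ?S \<le> 2" by (simp add: card_insert_le_m1)
    have S3: "Defs.clique J (verts J - ?S)" unfolding Defs.clique_def
    proof (intro ballI impI)
      fix x y assume x: "x \<in> verts J - ?S" and y: "y \<in> verts J - ?S" and "x \<noteq> y"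
      show "adj J x y"
      proof (rule ccontr)
        assume "\<not> adj J x y"
        moreover have "x \<in> verts J" "y \<in> verts J" using x y by auto
        ultimately have "{x, y} = {a, b}" using only \<open>x \<noteq> y\<close> by metis
        then show False using x by (auto simp: doubleton_eq_iff)
      qed
    qed
    have S4: "\<forall>v\<in>?S. (\<forall>u\<in>verts J - ?S. adj J v u)"
    proof (intro ballI)
      fix v u assume v: "v \<in> ?S" and u: "u \<in> verts J - ?S"
      show "adj J v u"
      proof (rule ccontr)
        assume "\<not> adj J v u"
        moreover have "v \<in> verts J" "v \<noteq> u" using v u ab by auto
        moreover have "u \<in> verts J" using u by auto
        ultimately have "{v, u} = {a, b}" using only by metis
        then show False using u by (auto simp: doubleton_eq_iff)
      qed
    qed
    show ?thesis unfolding s_star_def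
    proof (intro exI[of _ ?S] conjI)
      show "?S \<subseteq> verts J" using S1 .
      show "card ?S \<le> 2" using S2 .
      show "Defs.clique J (verts J - ?S) \<or> stable J (verts J - ?S)" using S3 by (rule disjI1)
      show "\<forall>v\<in>?S. (\<forall>u\<in>verts J - ?S. adj J v u) \<or> (\<forall>u\<in>verts J - ?S. \<not> adj J v u)"
        using S4 by blast
    qed
  qed
qed

theorem corollary3p3:
  fixes H :: "'a graph" and l :: nat
  assumes "graph H" and "ARS_graph l H"
  shows "chi_c_graph H = l \<and>
         (\<exists>n0. \<forall>G\<in>red (Forb H). card (verts G) \<ge> n0 \<longrightarrow> card (nonedges G) \<le> 1) \<and>
         critical 2 H"
proof (intro conjI)
  show "chi_c_graph H = l" unfolding chi_c_graph_def using chi_eq[OF assms] .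
  show P2: "\<exists>n0. \<forall>G\<in>red (Forb H). card (verts G) \<ge> n0 \<longrightarrow> card (nonedges G) \<le> 1"
    using part2[OF assms] .
  then obtain n0 where n0: "\<forall>G\<in>red (Forb H). card (verts G) \<ge> n0 \<longrightarrow> card (nonedges G) \<le> 1" by blast
  have "\<forall>K\<in>red (Forb H). card (verts K) \<ge> n0 \<longrightarrow> s_star 2 K"
  proof (intro ballI impI)
    fix K assume K: "K \<in> red (Forb H)" "card (verts K) \<ge> n0"
    then have "graph K" unfolding red_def by simp
    then show "s_star 2 K" using part3 n0 K by blast
  qed
  then show "critical 2 H" unfolding critical_def by blast
qed


end
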